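(* $$\big\|\mathrm{Cov}(\hat{\mathcal{I}}_1(\theta))\big\|_\infty\le\frac1N\|\partial h_L(x)\|_\infty^4\,\big\|\mathcal{K}(t)-\mathcal{I}(h_L)\otimes\mathcal{I}(h_L)\big\|_1,$$ and, if $\sigma\in C^2(\mathbb{R})$, $$\big\|\mathrm{Cov}(\hat{\mathcal{I}}_2(\theta))\big\|_\infty\le\frac1N\|\partial^2h_L(x)\|_\infty^2\,\|\mathcal{I}(h_L)\|_1 .$$
   Context: Setup. Fix an input $x\in\mathbb{R}^{n_0}$ and integers $L\ge1$, $n_1,\dots,n_L\ge1$. Network. The parameters are $\theta=(W_0,\dots,W_{L-1})$, with $W_l\in\mathbb{R}^{n_{l+1}\times(n_l+1)}$, viewed as a vector in $\mathbb{R}^{\dim\theta}$. Let $\sigma$ be differentiable and applied entrywise. Set $h_0=x$ and $\bar h_l=(h_l^\top,1)^\top$. For $1\le l\le L-1$ let $h_l=\sigma(W_{l-1}\bar h_{l-1})$, and let $h_L=W_{L-1}\bar h_{L-1}\in\mathbb{R}^{n_L}$. Exponential family. The model is $p(y\mid x,\theta)=\exp(t(y)^\top h_L-F(h_L))$ with respect to a base measure $\nu$, where $t(y)\in\mathbb{R}^{n_L}$ and $F(h)=\log\int\exp(t(y)^\top h)\,d\nu(y)$. Assume $h_L$ lies in the interior of the natural parameter space. Let $\eta=\mathbb{E}[t(y)]$ and $\mathcal{I}(h_L)=\mathrm{Cov}(t(y))$, with $y\sim p(y\mid x,\theta)$. Estimators. With $N$ i.i.d. samples $y_i\sim p(y\mid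 x,\theta)$ and $\ell_i=\log p(y_i\mid x,\theta)$, let $\hat{\mathcal{I}}_1(\theta)=\frac1N\sum_i\frac{\partial\ell_i}{\partial\theta}\frac{\partial\ell_i}{\partial\theta^\top}$ and $\hat{\mathcal{I}}_2(\theta)=\frac1N\sum_i(-\frac{\partial^2\ell_i}{\partial\theta\partial\theta^\top})$. Notation. $\mathrm{Cov}(\hat{\mathcal{I}})$ is the 4-tensor with entries $\mathrm{Cov}(\hat{\mathcal{I}}^{ij},\hat{\mathcal{I}}^{kl})$. $\partial h_L$ is the $n_L\times\dim\theta$ Jacobian and $\partial^2h_L$ the $n_L\times\dim\theta\times\dim\theta$ tensor of second derivatives with respect to $\theta$. $\mathcal{K}_{abcd}(t)=\mathbb{E}[(t_a-\eta_a)(t_b-\eta_b)(t_c-\eta_c)(t_d-\eta_d)]$ and $(\mathcal{I}\otimes\mathcal{I})_{abcd}=\mathcal{I}_{ab}\mathcal{I}_{cd}$. For a tensor, $\|\cdot\|_\infty$ is the maximum absolute entry and $\|\cdot\|_1$ the sum of absolute entries. *)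

theory Defs
  imports "HOL-Probability.Probability"
begin

(* Parameter vector theta: entry (l,r,c) is W_l[r,c], with l < L, r < n_(l+1), c <= n_l;
   column c = n_l multiplies the constant 1 of the augmented vector (bias). *)
type_synonym param = "nat \<times> nat \<times> nat \<Rightarrow> real"

definition param_idx :: "nat \<Rightarrow> (nat \<Rightarrow> nat) \<Rightarrow> (nat \<times> nat \<times> nat) set" where
  "param_idx L n = {(l, r, c). l < L \<and> r < n (Suc l) \<and> c \<le> n l}"

fun hidden :: "(real \<Rightarrow> real) \<Rightarrow> (nat \<Rightarrow> nat) \<Rightarrow> (nat \<Rightarrow> real) \<Rightarrow> param \<Rightarrow> nat \<Rightarrow> nat \<Rightarrow> real" where
  "hidden \<sigma> n x \<theta> 0 r = x r"
| "hidden \<sigma> n x \<theta> (Suc l) r =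
     \<sigma> ((\<Sum>c<n l. \<theta> (l, r, c) * hidden \<sigma> n x \<theta> l c) + \<theta> (l, r, n l))"

definition net_out :: "(real \<Rightarrow> real) \<Rightarrow> nat \<Rightarrow> (nat \<Rightarrow> nat) \<Rightarrow> (nat \<Rightarrow> real) \<Rightarrow> param \<Rightarrow> nat \<Rightarrow> real" where
  "net_out \<sigma> L n x \<theta> r =
     (\<Sum>c<n (L - 1). \<theta> (L - 1, r, c) * hidden \<sigma> n x \<theta> (L - 1) c) + \<theta> (L - 1, r, n (L - 1))"

definition partial_deriv :: "(param \<Rightarrow> real) \<Rightarrow> param \<Rightarrow> nat \<times> nat \<times> nat \<Rightarrow> real" where
  "partial_deriv f \<theta> j = deriv (\<lambda>s. f (\<theta>(j := s))) (\<theta> j)"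

definition C2_fun :: "(real \<Rightarrow> real) \<Rightarrow> bool" where
  "C2_fun \<sigma> = (\<exists>\<sigma>' \<sigma>''. (\<forall>z. (\<sigma> has_real_derivative \<sigma>' z) (at z)
                          \<and> (\<sigma>' has_real_derivative \<sigma>'' z) (at z))
                     \<and> continuous_on UNIV \<sigma>'')"

definition tdot :: "nat \<Rightarrow> ('y \<Rightarrow> nat \<Rightarrow> real) \<Rightarrow> 'y \<Rightarrow> (nat \<Rightarrow> real) \<Rightarrow> real" where
  "tdot m t y h = (\<Sum>a<m. t y a * h a)"

definition partition_int :: "'y measure \<Rightarrow> nat \<Rightarrow> ('y \<Rightarrow> nat \<Rightarrow> real) \<Rightarrow> (nat \<Rightarrow> real) \<Rightarrow> ennreal" where
  "partition_int \<nu> m t h = (\<integral>\<^sup>+ y. ennreal (exp (tdot m t y h)) \<partial>\<nu>)"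

definition log_partition :: "'y measure \<Rightarrow> nat \<Rightarrow> ('y \<Rightarrow> nat \<Rightarrow> real) \<Rightarrow> (nat \<Rightarrow> real) \<Rightarrow> real" where
  "log_partition \<nu> m t h = ln (enn2real (partition_int \<nu> m t h))"

definition nat_param_space :: "'y measure \<Rightarrow> nat \<Rightarrow> ('y \<Rightarrow> nat \<Rightarrow> real) \<Rightarrow> (nat \<Rightarrow> real) set" where
  "nat_param_space \<nu> m t = {h. 0 < partition_int \<nu> m t h \<and> partition_int \<nu> m t h < \<infinity>}"

definition in_interior_nps :: "'y measure \<Rightarrow> nat \<Rightarrow> ('y \<Rightarrow> nat \<Rightarrow> real) \<Rightarrow> (nat \<Rightarrow> real) \<Rightarrow> bool" where
  "in_interior_nps \<nu> m t h =
     (\<exists>e>0. \<forall>h'. (\<forall>a<m. \<bar>h' a - h a\<bar> < e) \<longrightarrow> h' \<in> nat_param_space \<nu> m t)"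

definition expfam_dens :: "'y measure \<Rightarrow> nat \<Rightarrow> ('y \<Rightarrow> nat \<Rightarrow> real) \<Rightarrow> (nat \<Rightarrow> real) \<Rightarrow> 'y \<Rightarrow> real" where
  "expfam_dens \<nu> m t h y = exp (tdot m t y h - log_partition \<nu> m t h)"

definition expfam :: "'y measure \<Rightarrow> nat \<Rightarrow> ('y \<Rightarrow> nat \<Rightarrow> real) \<Rightarrow> (nat \<Rightarrow> real) \<Rightarrow> 'y measure" where
  "expfam \<nu> m t h = density \<nu> (\<lambda>y. ennreal (expfam_dens \<nu> m t h y))"

definition mean_stat :: "'y measure \<Rightarrow> nat \<Rightarrow> ('y \<Rightarrow> nat \<Rightarrow> real) \<Rightarrow> (nat \<Rightarrow> real) \<Rightarrow> nat \<Rightarrow> real" where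
  "mean_stat \<nu> m t h a = (\<integral> y. t y a \<partial>(expfam \<nu> m t h))"

definition fisher_h :: "'y measure \<Rightarrow> nat \<Rightarrow> ('y \<Rightarrow> nat \<Rightarrow> real) \<Rightarrow> (nat \<Rightarrow> real) \<Rightarrow> nat \<Rightarrow> nat \<Rightarrow> real" where
  "fisher_h \<nu> m t h a b =
     (\<integral> y. (t y a - mean_stat \<nu> m t h a) * (t y b - mean_stat \<nu> m t h b) \<partial>(expfam \<nu> m t h))"

definition kurt_t :: "'y measure \<Rightarrow> nat \<Rightarrow> ('y \<Rightarrow> nat \<Rightarrow> real) \<Rightarrow> (nat \<Rightarrow> real) \<Rightarrow> nat \<Rightarrow> nat \<Rightarrow> nat \<Rightarrow> nat \<Rightarrow> real" where
  "kurt_t \<nu> m t h a b c d =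
     (\<integral> y. (t y a - mean_stat \<nu> m t h a) * (t y b - mean_stat \<nu> m t h b)
          * (t y c - mean_stat \<nu> m t h c) * (t y d - mean_stat \<nu> m t h d) \<partial>(expfam \<nu> m t h))"

definition loglik :: "(real \<Rightarrow> real) \<Rightarrow> nat \<Rightarrow> (nat \<Rightarrow> nat) \<Rightarrow> (nat \<Rightarrow> real) \<Rightarrow> 'y measure
                      \<Rightarrow> ('y \<Rightarrow> nat \<Rightarrow> real) \<Rightarrow> 'y \<Rightarrow> param \<Rightarrow> real" where
  "loglik \<sigma> L n x \<nu> t y \<theta> = ln (expfam_dens \<nu> (n L) t (net_out \<sigma> L n x \<theta>) y)"

definition Ihat1 :: "(real \<Rightarrow> real) \<Rightarrow> nat \<Rightarrow> (nat \<Rightarrow> nat) \<Rightarrow> (nat \<Rightarrow> real) \<Rightarrow> 'y measure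
                      \<Rightarrow> ('y \<Rightarrow> nat \<Rightarrow> real) \<Rightarrow> nat \<Rightarrow> param \<Rightarrow> (nat \<Rightarrow> 'y)
                      \<Rightarrow> nat \<times> nat \<times> nat \<Rightarrow> nat \<times> nat \<times> nat \<Rightarrow> real" where
  "Ihat1 \<sigma> L n x \<nu> t N \<theta> \<omega> j k =
     (1 / real N) * (\<Sum>i<N. partial_deriv (loglik \<sigma> L n x \<nu> t (\<omega> i)) \<theta> j
                          * partial_deriv (loglik \<sigma> L n x \<nu> t (\<omega> i)) \<theta> k)"

definition Ihat2 :: "(real \<Rightarrow> real) \<Rightarrow> nat \<Rightarrow> (nat \<Rightarrow> nat) \<Rightarrow> (nat \<Rightarrow> real) \<Rightarrow> 'y measure
                      \<Rightarrow> ('y \<Rightarrow> nat \<Rightarrow> real) \<Rightarrow> nat \<Rightarrow> param \<Rightarrow> (nat \<Rightarrow> 'y)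
                      \<Rightarrow> nat \<times> nat \<times> nat \<Rightarrow> nat \<times> nat \<times> nat \<Rightarrow> real" where
  "Ihat2 \<sigma> L n x \<nu> t N \<theta> \<omega> j k =
     (1 / real N) * (\<Sum>i<N. - partial_deriv
                              (\<lambda>\<theta>'. partial_deriv (loglik \<sigma> L n x \<nu> t (\<omega> i)) \<theta>' k) \<theta> j)"

definition cov :: "'a measure \<Rightarrow> ('a \<Rightarrow> real) \<Rightarrow> ('a \<Rightarrow> real) \<Rightarrow> real" where
  "cov M X Y = (\<integral> \<omega>. (X \<omega> - (\<integral> \<omega>'. X \<omega>' \<partial>M)) * (Y \<omega> - (\<integral> \<omega>'. Y \<omega>' \<partial>M)) \<partial>M)"

definition norm_inf :: "('i \<Rightarrow> real) \<Rightarrow> 'i set \<Rightarrow> real" where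
  "norm_inf T S = Max ((\<lambda>i. \<bar>T i\<bar>) ` S)"

definition norm_one :: "('i \<Rightarrow> real) \<Rightarrow> 'i set \<Rightarrow> real" where
  "norm_one T S = (\<Sum>i\<in>S. \<bar>T i\<bar>)"

end

theory Submission
  imports Defs
begin


definition D1 :: "(param \<Rightarrow> real) \<Rightarrow> bool" where
  "D1 f \<longleftrightarrow> (\<forall>\<theta> k. (\<lambda>s. f (\<theta>(k:=s))) differentiable (at (\<theta> k)))"

definition D2 :: "(param \<Rightarrow> real) \<Rightarrow> bool" where
  "D2 f \<longleftrightarrow> D1 f \<and> (\<forall>k. D1 (\<lambda>\<theta>. partial_deriv f \<theta> k))"

lemma pd_deriv:
  assumes "D1 f"
  shows "((\<lambda>s. f (\<theta>(k:=s))) has_real_derivative partial_deriv f \<theta> k) (at (\<theta> k))"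
proof -
  have "(\<lambda>s. f (\<theta>(k:=s))) differentiable (at (\<theta> k))"
    using assms unfolding D1_def by blast
  then show ?thesis unfolding partial_deriv_def
    by (simp add: DERIV_deriv_iff_real_differentiable)
qed

lemma pd_deriv_at:
  assumes "D1 f"
  shows "((\<lambda>s. f (\<theta>(k:=s))) has_real_derivative partial_deriv f (\<theta>(k:=s0)) k) (at s0)"
  using pd_deriv[OF assms, of "\<theta>(k:=s0)" k] by simp

lemma D1I:
  assumes "\<And>\<theta> k. \<exists>D. ((\<lambda>s. f (\<theta>(k:=s))) has_real_derivative D) (at (\<theta> k))"
  shows "D1 f"
  using assms unfolding D1_def by (meson real_differentiable_def)

lemma D1_const: "D1 (\<lambda>\<theta>. c)"
  by (rule D1I) (auto intro: derivative_eq_intros)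

lemma pd_unique:
  assumes "((\<lambda>s. f (\<theta>(k:=s))) has_real_derivative D) (at (\<theta> k))"
  shows "partial_deriv f \<theta> k = D"
  using assms unfolding partial_deriv_def by (rule DERIV_imp_deriv)

lemma proj_line: "(\<lambda>s. (\<theta>(k:=s)) p) = (if p = k then (\<lambda>s. s) else (\<lambda>s. \<theta> p))"
  by auto

lemma proj_deriv: "((\<lambda>s. (\<theta>(k:=s)) p) has_real_derivative (if p = k then 1 else 0)) (at s0)"
  unfolding proj_line by (auto intro: derivative_eq_intros)

lemma D1_proj: "D1 (\<lambda>\<theta>. \<theta> p)"
  by (rule D1I, rule exI, rule proj_deriv)

lemma pd_proj: "partial_deriv (\<lambda>\<theta>. \<theta> p) \<theta> k = (if p = k then 1 else 0)"
  by (rule pd_unique) (rule proj_deriv)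

lemma pd_const: "partial_deriv (\<lambda>\<theta>. c) \<theta> k = 0"
  by (rule pd_unique) (auto intro: derivative_eq_intros)

lemma D1_add: "D1 f \<Longrightarrow> D1 g \<Longrightarrow> D1 (\<lambda>\<theta>. f \<theta> + g \<theta>)"
  by (rule D1I) (use pd_deriv DERIV_add in blast)

lemma pd_add: "D1 f \<Longrightarrow> D1 g \<Longrightarrow> partial_deriv (\<lambda>\<theta>. f \<theta> + g \<theta>) \<theta> k = partial_deriv f \<theta> k + partial_deriv g \<theta> k"
  by (rule pd_unique) (rule DERIV_add; rule pd_deriv)

lemma D1_mult: "D1 f \<Longrightarrow> D1 g \<Longrightarrow> D1 (\<lambda>\<theta>. f \<theta> * g \<theta>)"
  by (rule D1I) (use pd_deriv DERIV_mult in blast)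

lemma pd_mult: "D1 f \<Longrightarrow> D1 g \<Longrightarrow> partial_deriv (\<lambda>\<theta>. f \<theta> * g \<theta>) \<theta> k
   = partial_deriv f \<theta> k * g \<theta> + f \<theta> * partial_deriv g \<theta> k"
proof -
  assume a: "D1 f" "D1 g"
  have "((\<lambda>s. f (\<theta>(k:=s)) * g (\<theta>(k:=s))) has_real_derivative
     partial_deriv f \<theta> k * g (\<theta>(k:=\<theta> k)) + partial_deriv g \<theta> k * f (\<theta>(k:=\<theta> k))) (at (\<theta> k))"
    by (rule DERIV_mult; rule pd_deriv, fact)
  then show ?thesis by (intro pd_unique) (simp add: algebra_simps)
qed

lemma D1_sum: "finite A \<Longrightarrow> (\<And>i. i \<in> A \<Longrightarrow> D1 (f i)) \<Longrightarrow> D1 (\<lambda>\<theta>. \<Sum>i\<in>A. f i \<theta>)"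
  by (induction A rule: finite_induct) (auto intro: D1_const D1_add)

lemma pd_sum: "finite A \<Longrightarrow> (\<And>i. i \<in> A \<Longrightarrow> D1 (f i)) \<Longrightarrow>
   partial_deriv (\<lambda>\<theta>. \<Sum>i\<in>A. f i \<theta>) \<theta> k = (\<Sum>i\<in>A. partial_deriv (f i) \<theta> k)"
proof (induction A rule: finite_induct)
  case empty then show ?case by (simp add: pd_const)
next
  case (insert a A)
  have "partial_deriv (\<lambda>\<theta>. \<Sum>i\<in>insert a A. f i \<theta>) \<theta> k
      = partial_deriv (\<lambda>\<theta>. f a \<theta> + (\<Sum>i\<in>A. f i \<theta>)) \<theta> k"
    using insert by simp
  also have "\<dots> = partial_deriv (f a) \<theta> k + partial_deriv (\<lambda>\<theta>. \<Sum>i\<in>A. f i \<theta>) \<theta> k"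
    using insert by (intro pd_add D1_sum) auto
  finally show ?case using insert by simp
qed

lemma D1_comp:
  assumes "\<forall>z. \<sigma> differentiable (at z)" "D1 f"
  shows "D1 (\<lambda>\<theta>. \<sigma> (f \<theta>))"
  unfolding D1_def
proof (intro allI)
  fix \<theta> k
  have 1: "(\<lambda>s. f (\<theta>(k:=s))) differentiable (at (\<theta> k))" using assms(2) unfolding D1_def by blast
  have 2: "\<sigma> differentiable (at (f (\<theta>(k:=\<theta> k))))" using assms(1) by blast
  have "(\<sigma> \<circ> (\<lambda>s. f (\<theta>(k:=s)))) differentiable (at (\<theta> k))"
    by (rule differentiable_chain_at[OF 1 2])
  then show "(\<lambda>s. \<sigma> (f (\<theta>(k:=s)))) differentiable (at (\<theta> k))" by (simp add: o_def)
qed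

lemma pd_comp:
  assumes "\<And>z. (\<sigma> has_real_derivative \<sigma>' z) (at z)" "D1 f"
  shows "partial_deriv (\<lambda>\<theta>. \<sigma> (f \<theta>)) \<theta> k = \<sigma>' (f \<theta>) * partial_deriv f \<theta> k"
proof -
  have "((\<lambda>s. \<sigma> (f (\<theta>(k:=s)))) has_real_derivative \<sigma>' (f (\<theta>(k:=\<theta> k))) * partial_deriv f \<theta> k) (at (\<theta> k))"
    using DERIV_chain2[OF assms(1) pd_deriv[OF assms(2)]] .
  then show ?thesis by (intro pd_unique) simp
qed

lemma D2_const: "D2 (\<lambda>\<theta>. c)"
  unfolding D2_def by (simp add: D1_const pd_const)

lemma D2_proj: "D2 (\<lambda>\<theta>. \<theta> p)"
  unfolding D2_def by (simp add: D1_proj pd_proj D1_const)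

lemma D2_add: "D2 f \<Longrightarrow> D2 g \<Longrightarrow> D2 (\<lambda>\<theta>. f \<theta> + g \<theta>)"
  unfolding D2_def by (simp add: pd_add D1_add)

lemma D2_mult: "D2 f \<Longrightarrow> D2 g \<Longrightarrow> D2 (\<lambda>\<theta>. f \<theta> * g \<theta>)"
  unfolding D2_def by (simp add: pd_mult D1_add D1_mult)

lemma D2_sum: "finite A \<Longrightarrow> (\<And>i. i \<in> A \<Longrightarrow> D2 (f i)) \<Longrightarrow> D2 (\<lambda>\<theta>. \<Sum>i\<in>A. f i \<theta>)"
  by (induction A rule: finite_induct) (auto intro: D2_const D2_add)

lemma D2_comp:
  assumes "C2_fun \<sigma>" "D2 f"
  shows "D2 (\<lambda>\<theta>. \<sigma> (f \<theta>))"
proof -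
  obtain \<sigma>' \<sigma>'' where s: "\<And>z. (\<sigma> has_real_derivative \<sigma>' z) (at z)"
     "\<And>z. (\<sigma>' has_real_derivative \<sigma>'' z) (at z)"
    using assms(1) unfolding C2_fun_def by blast
  have d: "\<forall>z. \<sigma> differentiable (at z)" "\<forall>z. \<sigma>' differentiable (at z)"
    using s real_differentiable_def by blast+
  have f: "D1 f" "\<And>k. D1 (\<lambda>\<theta>. partial_deriv f \<theta> k)" using assms(2) unfolding D2_def by auto
  show ?thesis unfolding D2_def
    using D1_comp[OF d(1) f(1)] pd_comp[OF s(1) f(1)] D1_mult[OF D1_comp[OF d(2) f(1)] f(2)]
    by simp
qed

lemma D1_hidden:
  assumes "\<forall>z. \<sigma> differentiable (at z)"
  shows "D1 (\<lambda>\<theta>. hidden \<sigma> n x \<theta> l r)"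
proof (induction l arbitrary: r)
  case 0 then show ?case by (simp add: D1_const)
next
  case (Suc l)
  show ?case
    by (simp, rule D1_comp[OF assms], rule D1_add, rule D1_sum)
       (auto intro: D1_mult D1_proj Suc)
qed

lemma D2_hidden:
  assumes "C2_fun \<sigma>"
  shows "D2 (\<lambda>\<theta>. hidden \<sigma> n x \<theta> l r)"
proof (induction l arbitrary: r)
  case 0 then show ?case by (simp add: D2_const)
next
  case (Suc l)
  show ?case
    by (simp, rule D2_comp[OF assms], rule D2_add, rule D2_sum)
       (auto intro: D2_mult D2_proj Suc)
qed

lemma D1_net:
  assumes "\<forall>z. \<sigma> differentiable (at z)"
  shows "D1 (\<lambda>\<theta>. net_out \<sigma> L n x \<theta> a)"
  unfolding net_out_def
  by (rule D1_add, rule D1_sum) (simp_all add: D1_mult[OF D1_proj D1_hidden[OF assms]] D1_proj)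

lemma D2_net:
  assumes "C2_fun \<sigma>"
  shows "D2 (\<lambda>\<theta>. net_out \<sigma> L n x \<theta> a)"
  unfolding net_out_def
  by (rule D2_add, rule D2_sum) (simp_all add: D2_mult[OF D2_proj D2_hidden[OF assms]] D2_proj)


lemma curve_deriv:
  fixes \<Phi> :: "(nat \<Rightarrow> real) \<Rightarrow> real" and g :: "real \<Rightarrow> nat \<Rightarrow> real"
  assumes quad: "\<And>v. (\<forall>a<m. \<bar>v a\<bar> \<le> \<delta>) \<Longrightarrow>
          \<bar>\<Phi> (\<lambda>a. h a + v a) - \<Phi> h - (\<Sum>a<m. D a * v a)\<bar> \<le> C * (\<Sum>a<m. \<bar>v a\<bar>)\<^sup>2"
    and dpos: "\<delta> > 0" and Cpos: "C \<ge> 0"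
    and g0: "g s0 = h"
    and gd: "\<And>a. a < m \<Longrightarrow> ((\<lambda>s. g s a) has_real_derivative g' a) (at s0)"
  shows "((\<lambda>s. \<Phi> (g s)) has_real_derivative (\<Sum>a<m. D a * g' a)) (at s0)"
proof -
  define R where "R s = \<Phi> (g s) - \<Phi> h - (\<Sum>a<m. D a * (g s a - h a))" for s
  define V where "V s = (\<Sum>a<m. \<bar>g s a - h a\<bar>)" for s
  have gs: "g s = (\<lambda>a. h a + (g s a - h a))" for s by auto
  have conv: "((\<lambda>s. g s a) \<longlongrightarrow> h a) (at s0)" if "a < m" for a
  proof -
    have "isCont (\<lambda>s. g s a) s0" using gd[OF that] by (rule DERIV_isCont)
    then show ?thesis using g0 unfolding isCont_def by simp
  qed
  have quot: "((\<lambda>s. (g s a - h a) / (s - s0)) \<longlongrightarrow> g' a) (at s0)" if "a < m" for a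
    using gd[OF that] g0 unfolding has_field_derivative_iff by simp
  have ev: "\<forall>\<^sub>F s in at s0. \<forall>a\<in>{..<m}. \<bar>g s a - h a\<bar> \<le> \<delta>"
  proof (rule eventually_ball_finite)
    show "\<forall>a\<in>{..<m}. \<forall>\<^sub>F s in at s0. \<bar>g s a - h a\<bar> \<le> \<delta>"
    proof
      fix a assume "a \<in> {..<m}"
      then have "\<forall>\<^sub>F s in at s0. dist (g s a) (h a) < \<delta>" using tendstoD[OF conv dpos] by auto
      then show "\<forall>\<^sub>F s in at s0. \<bar>g s a - h a\<bar> \<le> \<delta>"
        by eventually_elim (simp add: dist_real_def)
    qed
  qed auto
  have Rb: "\<forall>\<^sub>F s in at s0. norm (R s / (s - s0)) \<le> C * V s * (\<Sum>a<m. \<bar>(g s a - h a) / (s - s0)\<bar>)"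
    using ev
  proof eventually_elim
    case (elim s)
    have "\<bar>R s\<bar> \<le> C * (V s)\<^sup>2"
      unfolding R_def V_def using quad[of "\<lambda>a. g s a - h a"] elim gs[of s] by simp
    moreover have "(\<Sum>a<m. \<bar>(g s a - h a) / (s - s0)\<bar>) = V s / \<bar>s - s0\<bar>"
      unfolding V_def by (simp add: sum_divide_distrib abs_divide)
    ultimately show ?case
    proof -
      assume A: "\<bar>R s\<bar> \<le> C * (V s)\<^sup>2" and B: "(\<Sum>a<m. \<bar>(g s a - h a) / (s - s0)\<bar>) = V s / \<bar>s - s0\<bar>"
      have "norm (R s / (s - s0)) = \<bar>R s\<bar> / \<bar>s - s0\<bar>" by (simp add: abs_divide)
      also have "\<dots> \<le> C * (V s)\<^sup>2 / \<bar>s - s0\<bar>" using A by (intro divide_right_mono) auto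
      also have "\<dots> = C * V s * (V s / \<bar>s - s0\<bar>)" by (simp add: power2_eq_square)
      finally show ?thesis using B by simp
    qed
  qed
  have V0: "(V \<longlongrightarrow> 0) (at s0)"
  proof -
    have "((\<lambda>s. \<Sum>a<m. \<bar>g s a - h a\<bar>) \<longlongrightarrow> (\<Sum>a<m. \<bar>h a - h a\<bar>)) (at s0)"
      by (intro tendsto_sum tendsto_rabs tendsto_diff conv tendsto_const) auto
    then show ?thesis unfolding V_def by simp
  qed
  have "((\<lambda>s. C * V s * (\<Sum>a<m. \<bar>(g s a - h a) / (s - s0)\<bar>)) \<longlongrightarrow> C * 0 * (\<Sum>a<m. \<bar>g' a\<bar>)) (at s0)"
    by (intro tendsto_mult tendsto_const V0 tendsto_sum tendsto_rabs quot) auto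
  then have T: "((\<lambda>s. C * V s * (\<Sum>a<m. \<bar>(g s a - h a) / (s - s0)\<bar>)) \<longlongrightarrow> 0) (at s0)" by simp
  have R0: "((\<lambda>s. R s / (s - s0)) \<longlongrightarrow> 0) (at s0)"
    by (rule Lim_null_comparison[OF Rb T])
  have L1: "((\<lambda>s. \<Sum>a<m. D a * ((g s a - h a) / (s - s0))) \<longlongrightarrow> (\<Sum>a<m. D a * g' a)) (at s0)"
    by (intro tendsto_sum tendsto_mult tendsto_const quot) auto
  have eq: "(\<Phi> (g s) - \<Phi> (g s0)) / (s - s0) = (\<Sum>a<m. D a * ((g s a - h a) / (s - s0))) + R s / (s - s0)" for s
  proof -
    have "(\<Sum>a<m. D a * ((g s a - h a) / (s - s0))) = (\<Sum>a<m. D a * (g s a - h a)) / (s - s0)"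
      by (simp add: sum_divide_distrib)
    then show ?thesis unfolding R_def g0 by (simp add: diff_divide_distrib)
  qed
  show ?thesis unfolding has_field_derivative_iff eq
    using tendsto_add[OF L1 R0] by simp
qed


locale efam =
  fixes \<nu> :: "'y measure" and m :: nat and t :: "'y \<Rightarrow> nat \<Rightarrow> real"
  assumes tm: "\<And>a. a < m \<Longrightarrow> (\<lambda>y. t y a) \<in> borel_measurable \<nu>"
begin

definition S where "S y = (\<Sum>a<m. \<bar>t y a\<bar>)"
definition E where "E h y = exp (tdot m t y h)"
definition Z where "Z h = enn2real (partition_int \<nu> m t h)"
definition intr where "intr h e \<longleftrightarrow> e > 0 \<and> (\<forall>h'. (\<forall>a<m. \<bar>h' a - h a\<bar> < e) \<longrightarrow> h' \<in> nat_param_space \<nu> m t)"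

lemma tdot_meas[measurable]: "(\<lambda>y. tdot m t y h) \<in> borel_measurable \<nu>"
  unfolding tdot_def by (intro borel_measurable_sum borel_measurable_times) (auto intro: tm)

lemma S_meas[measurable]: "S \<in> borel_measurable \<nu>"
  unfolding S_def by (intro borel_measurable_sum borel_measurable_abs) (auto intro: tm)

lemma E_meas[measurable]: "E h \<in> borel_measurable \<nu>"
  unfolding E_def by measurable

lemma E_pos: "E h y > 0" unfolding E_def by simp

lemma S_nonneg: "S y \<ge> 0" unfolding S_def by (simp add: sum_nonneg)

lemma abs_t_le_S: "a < m \<Longrightarrow> \<bar>t y a\<bar> \<le> S y"
  unfolding S_def by (rule member_le_sum) auto

lemma tdot_add: "tdot m t y (\<lambda>a. h a + v a) = tdot m t y h + tdot m t y v"
  unfolding tdot_def by (simp add: distrib_left sum.distrib)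

lemma E_add: "E (\<lambda>a. h a + v a) y = E h y * exp (tdot m t y v)"
  unfolding E_def tdot_add by (simp add: exp_add)

lemma nps_int:
  assumes "h \<in> nat_param_space \<nu> m t"
  shows "integrable \<nu> (E h)"
proof -
  have fin: "partition_int \<nu> m t h < \<infinity>" using assms unfolding nat_param_space_def by auto
  have "(\<integral>\<^sup>+ y. ennreal (E h y) \<partial>\<nu>) = ennreal (enn2real (partition_int \<nu> m t h))"
    using fin unfolding partition_int_def E_def by (simp add: ennreal_enn2real_if)
  then show ?thesis
    by (intro integrableI_nn_integral_finite) (auto simp: less_imp_le[OF E_pos])
qed

lemma nps_Z:
  assumes "h \<in> nat_param_space \<nu> m t"
  shows "Z h = integral\<^sup>L \<nu> (E h)"
  unfolding Z_def partition_int_def E_def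
  by (rule enn2real_nn_integral_eq_integral) (auto simp: less_imp_le)

lemma nps_Zpos:
  assumes "h \<in> nat_param_space \<nu> m t"
  shows "Z h > 0"
  using assms unfolding Z_def nat_param_space_def by (simp add: enn2real_positive_iff)

lemma intr_nps: "intr h e \<Longrightarrow> h \<in> nat_param_space \<nu> m t"
  unfolding intr_def by auto

lemma intr_shift:
  assumes "intr h e" "\<forall>a<m. \<bar>h' a - h a\<bar> < e / 2"
  shows "intr h' (e / 2)"
  using assms unfolding intr_def by (smt (verit, del_insts) field_sum_of_halves)

lemma exp_S_bound:
  assumes "\<rho> \<ge> 0"
  shows "exp (\<rho> * S y) \<le> (\<Sum>X\<in>Pow {..<m}. (\<Prod>a\<in>X. exp (\<rho> * t y a)) * (\<Prod>a\<in>{..<m} - X. exp (- \<rho> * t y a)))"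
proof -
  have "exp (\<rho> * S y) = (\<Prod>a<m. exp (\<rho> * \<bar>t y a\<bar>))"
    unfolding S_def sum_distrib_left by (simp add: exp_sum)
  also have "\<dots> \<le> (\<Prod>a<m. exp (\<rho> * t y a) + exp (- \<rho> * t y a))"
  proof (rule prod_mono)
    fix a
    have "exp (\<rho> * \<bar>t y a\<bar>) \<le> exp (\<rho> * t y a) + exp (- \<rho> * t y a)"
      by (cases "t y a \<ge> 0") (auto simp: add_increasing add_increasing2)
    then show "0 \<le> exp (\<rho> * \<bar>t y a\<bar>) \<and> exp (\<rho> * \<bar>t y a\<bar>) \<le> exp (\<rho> * t y a) + exp (- \<rho> * t y a)"
      by simp
  qed
  also have "\<dots> = (\<Sum>X\<in>Pow {..<m}. (\<Prod>a\<in>X. exp (\<rho> * t y a)) * (\<Prod>a\<in>{..<m} - X. exp (- \<rho> * t y a)))"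
    by (rule prod_add) simp
  finally show ?thesis .
qed

lemma E_shift:
  assumes "X \<subseteq> {..<m}"
  shows "E (\<lambda>a. h' a + (if a \<in> X then \<rho> else - \<rho>)) y
       = E h' y * ((\<Prod>a\<in>X. exp (\<rho> * t y a)) * (\<Prod>a\<in>{..<m} - X. exp (- \<rho> * t y a)))"
proof -
  have 1: "E (\<lambda>a. h' a + (if a \<in> X then \<rho> else - \<rho>)) y
     = E h' y * exp (\<Sum>a<m. if a \<in> X then \<rho> * t y a else - \<rho> * t y a)"
  proof -
    have "tdot m t y (\<lambda>a. if a \<in> X then \<rho> else - \<rho>) = (\<Sum>a<m. if a \<in> X then \<rho> * t y a else - \<rho> * t y a)"
      unfolding tdot_def by (rule sum.cong) auto
    then show ?thesis unfolding E_add by simp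
  qed
  have 2: "exp (\<Sum>a<m. if a \<in> X then \<rho> * t y a else - \<rho> * t y a)
      = (\<Prod>a<m. if a \<in> X then exp (\<rho> * t y a) else exp (- \<rho> * t y a))"
    by (simp add: exp_sum if_distrib[of exp])
  have 3: "{..<m} \<inter> {a. a \<in> X} = X" "{..<m} \<inter> - {a. a \<in> X} = {..<m} - X"
     "{..<m} \<inter> X = X" "{..<m} \<inter> - X = {..<m} - X" using assms by auto
  show ?thesis unfolding 1 2 by (simp add: prod.If_cases 3)
qed

lemma G1:
  assumes "intr h e" "\<forall>a<m. \<bar>h' a - h a\<bar> \<le> r" "r + \<rho> < e" "\<rho> \<ge> 0"
  shows "integrable \<nu> (\<lambda>y. E h' y * exp (\<rho> * S y))"
proof -
  define sh where "sh X = (\<lambda>a. h' a + (if a \<in> X then \<rho> else - \<rho>))" for X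
  have nps: "sh X \<in> nat_param_space \<nu> m t" for X
  proof -
    have "\<forall>a<m. \<bar>sh X a - h a\<bar> < e"
      using assms(2,3,4) unfolding sh_def by (smt (verit))
    then show ?thesis using assms(1) unfolding intr_def by blast
  qed
  have int: "integrable \<nu> (\<lambda>y. \<Sum>X\<in>Pow {..<m}. E (sh X) y)"
    by (rule Bochner_Integration.integrable_sum) (rule nps_int[OF nps])
  show ?thesis
  proof (rule Bochner_Integration.integrable_bound[OF int])
    show "(\<lambda>y. E h' y * exp (\<rho> * S y)) \<in> borel_measurable \<nu>" by measurable
    show "AE y in \<nu>. norm (E h' y * exp (\<rho> * S y)) \<le> norm (\<Sum>X\<in>Pow {..<m}. E (sh X) y)"
    proof (rule AE_I2)
      fix y
      have "E h' y * exp (\<rho> * S y) \<le> E h' y * (\<Sum>X\<in>Pow {..<m}. (\<Prod>a\<in>X. exp (\<rho> * t y a)) * (\<Prod>a\<in>{..<m} - X. exp (- \<rho> * t y a)))"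
        using exp_S_bound[OF assms(4)] E_pos by (intro mult_left_mono) (auto simp: less_imp_le)
      also have "\<dots> = (\<Sum>X\<in>Pow {..<m}. E (sh X) y)"
        unfolding sum_distrib_left sh_def by (intro sum.cong refl) (simp add: E_shift)
      finally have "E h' y * exp (\<rho> * S y) \<le> (\<Sum>X\<in>Pow {..<m}. E (sh X) y)" .
      moreover have "0 \<le> E h' y * exp (\<rho> * S y)" using E_pos by (simp add: less_imp_le)
      ultimately show "norm (E h' y * exp (\<rho> * S y)) \<le> norm (\<Sum>X\<in>Pow {..<m}. E (sh X) y)" by simp
    qed
  qed
qed

lemma poly_exp_bound:
  assumes "x \<ge> 0" "\<rho> > 0"
  shows "(1 + x) ^ k \<le> (real (Suc k) / \<rho>) ^ Suc k * exp \<rho> * exp (\<rho> * x)"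
proof -
  define K where "K = real (Suc k)"
  have Kp: "K > 0" unfolding K_def by simp
  have "\<rho> * (1 + x) / K \<le> exp (\<rho> * (1 + x) / K)" by (rule order_trans[OF _ exp_ge_add_one_self]) simp
  then have "(\<rho> * (1 + x) / K) ^ Suc k \<le> exp (\<rho> * (1 + x) / K) ^ Suc k"
    using assms Kp by (intro power_mono) auto
  also have "\<dots> = exp (\<rho> * (1 + x))"
    unfolding K_def by (rule exp_divide_power_eq) simp
  finally have A: "(\<rho> * (1 + x) / K) ^ Suc k \<le> exp (\<rho> * (1 + x))" .
  have "(1 + x) ^ k \<le> (1 + x) ^ Suc k" using assms by (intro power_increasing) auto
  also have "\<dots> = (K / \<rho>) ^ Suc k * (\<rho> * (1 + x) / K) ^ Suc k"
    using Kp assms by (simp add: power_mult_distrib[symmetric])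
  also have "\<dots> \<le> (K / \<rho>) ^ Suc k * exp (\<rho> * (1 + x))"
    using A Kp assms by (intro mult_left_mono) auto
  also have "\<dots> = (K / \<rho>) ^ Suc k * exp \<rho> * exp (\<rho> * x)"
    by (simp add: distrib_left exp_add)
  finally show ?thesis unfolding K_def .
qed

lemma G3:
  assumes "intr h e" "\<forall>a<m. \<bar>h' a - h a\<bar> \<le> r" "r + \<rho>' < e" "\<rho>' \<ge> 0"
    and fm: "f \<in> borel_measurable \<nu>"
    and fb: "\<And>y. \<bar>f y\<bar> \<le> C * (1 + S y) ^ k * exp (\<rho>' * S y)"
  shows "integrable \<nu> (\<lambda>y. E h' y * f y)"
proof -
  define \<rho> where "\<rho> = (e - r - \<rho>') / 2"
  have rp1: "\<rho> > 0" using assms(3) unfolding \<rho>_def by simp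
  have rp2: "r + (\<rho> + \<rho>') < e" using assms(3) unfolding \<rho>_def by (simp add: field_simps)
  note rp = rp1 rp2
  define c where "c = (real (Suc k) / \<rho>) ^ Suc k * exp \<rho>"
  have int: "integrable \<nu> (\<lambda>y. (C * c) * (E h' y * exp ((\<rho> + \<rho>') * S y)))"
    using G1[OF assms(1,2) rp(2)] rp assms(4) by (intro integrable_mult_right) auto
  show ?thesis
  proof (rule Bochner_Integration.integrable_bound[OF int])
    show "(\<lambda>y. E h' y * f y) \<in> borel_measurable \<nu>" using fm by measurable
    show "AE y in \<nu>. norm (E h' y * f y) \<le> norm (C * c * (E h' y * exp ((\<rho> + \<rho>') * S y)))"
    proof (rule AE_I2)
      fix y
      have Ep: "E h' y > 0" by (rule E_pos)
      have P: "(1 + S y) ^ k \<le> c * exp (\<rho> * S y)" unfolding c_def by (rule poly_exp_bound[OF S_nonneg rp(1)])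
      have "\<bar>E h' y * f y\<bar> = E h' y * \<bar>f y\<bar>" using Ep by (simp add: abs_mult)
      also have "\<dots> \<le> E h' y * (C * (1 + S y) ^ k * exp (\<rho>' * S y))" using Ep fb by (intro mult_left_mono) auto
      also have "\<dots> \<le> E h' y * (C * (c * exp (\<rho> * S y)) * exp (\<rho>' * S y))"
      proof -
        have p: "0 < (1 + S y) ^ k * exp (\<rho>' * S y)" using S_nonneg[of y] by simp
        have "0 \<le> C * ((1 + S y) ^ k * exp (\<rho>' * S y))"
          using fb[of y] abs_ge_zero[of "f y"] by (simp add: mult.assoc)
        then have "0 \<le> C" using p by (simp add: zero_le_mult_iff)
        then show ?thesis using Ep P by (intro mult_left_mono mult_right_mono) auto
      qed
      also have "\<dots> = C * c * (E h' y * exp ((\<rho> + \<rho>') * S y))"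
        by (simp add: distrib_right exp_add)
      finally show "norm (E h' y * f y) \<le> norm (C * c * (E h' y * exp ((\<rho> + \<rho>') * S y)))" by simp
    qed
  qed
qed

end


lemma exp_taylor2: "\<bar>exp x - 1 - x\<bar> \<le> exp \<bar>x\<bar> * (x::real)\<^sup>2"
proof -
  obtain \<tau> :: real where tau: "\<bar>\<tau>\<bar> \<le> \<bar>x\<bar>" "exp x = (\<Sum>m<2. x ^ m / fact m) + exp \<tau> / fact 2 * x ^ 2"
    using Maclaurin_exp_le[of x 2] by blast
  have eq: "exp x - 1 - x = exp \<tau> / 2 * x\<^sup>2" using tau(2) by (simp add: numeral_2_eq_2)
  have "\<bar>exp x - 1 - x\<bar> = exp \<tau> / 2 * x\<^sup>2" unfolding eq by simp
  also have "\<dots> \<le> exp \<tau> * x\<^sup>2" by (simp add: mult_right_mono)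
  also have "\<dots> \<le> exp \<bar>x\<bar> * x\<^sup>2" by (rule mult_right_mono) (use tau(1) in auto)
  finally show ?thesis .
qed

context efam
begin

definition Za where "Za a h = (\<integral>y. E h y * t y a \<partial>\<nu>)"
definition Zab where "Zab a b h = (\<integral>y. E h y * (t y a * t y b) \<partial>\<nu>)"

lemma abs_tdot_le: "\<bar>tdot m t y v\<bar> \<le> (\<Sum>a<m. \<bar>t y a\<bar> * \<bar>v a\<bar>)"
  unfolding tdot_def by (rule order_trans[OF sum_abs]) (simp add: abs_mult)

lemma tdot_le_SV: "(\<Sum>a<m. \<bar>t y a\<bar> * \<bar>v a\<bar>) \<le> S y * (\<Sum>a<m. \<bar>v a\<bar>)"
  unfolding S_def sum_distrib_right
  by (intro sum_mono mult_left_mono member_le_sum) auto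

lemma tdot_le_Sd: "\<forall>a<m. \<bar>v a\<bar> \<le> d \<Longrightarrow> (\<Sum>a<m. \<bar>t y a\<bar> * \<bar>v a\<bar>) \<le> S y * d"
  unfolding S_def sum_distrib_right
  by (intro sum_mono mult_left_mono) auto

lemma TQ:
  assumes ih: "intr h e" and wm: "w \<in> borel_measurable \<nu>" and wb: "\<And>y. \<bar>w y\<bar> \<le> (1 + S y) ^ p"
    and v: "\<forall>a<m. \<bar>v a\<bar> \<le> e / 4"
  shows "\<bar>(\<integral>y. E (\<lambda>a. h a + v a) y * w y \<partial>\<nu>) - (\<integral>y. E h y * w y \<partial>\<nu>)
           - (\<Sum>a<m. (\<integral>y. E h y * (w y * t y a) \<partial>\<nu>) * v a)\<bar>
         \<le> (\<integral>y. E h y * ((1 + S y) ^ (p + 2) * exp (e / 4 * S y)) \<partial>\<nu>) * (\<Sum>a<m. \<bar>v a\<bar>)\<^sup>2"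
proof -
  have ep: "e > 0" using ih unfolding intr_def by auto
  define V where "V = (\<Sum>a<m. \<bar>v a\<bar>)"
  define G where "G y = (1 + S y) ^ (p + 2) * exp (e / 4 * S y)" for y
  have Gm[measurable]: "G \<in> borel_measurable \<nu>" unfolding G_def by measurable
  have i1: "integrable \<nu> (\<lambda>y. E (\<lambda>a. h a + v a) y * w y)"
    by (rule G3[OF ih _ _ _ wm, of _ "e/4" 0 1 p]) (use v ep wb in auto)
  have i0: "integrable \<nu> (\<lambda>y. E h y * w y)"
    by (rule G3[OF ih _ _ _ wm, of _ 0 0 1 p]) (use ep wb in auto)
  have ia: "integrable \<nu> (\<lambda>y. E h y * (w y * t y a))" if "a < m" for a
  proof (rule G3[OF ih _ _ _ _, of _ 0 0 _ 1 "Suc p"])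
    show "(\<lambda>y. w y * t y a) \<in> borel_measurable \<nu>" using wm tm[OF that] by measurable
    show "\<bar>w y * t y a\<bar> \<le> 1 * (1 + S y) ^ Suc p * exp (0 * S y)" for y
    proof -
      have "\<bar>w y * t y a\<bar> \<le> (1 + S y) ^ p * (1 + S y)"
        unfolding abs_mult using wb[of y] abs_t_le_S[OF that, of y] S_nonneg[of y]
        by (intro mult_mono) auto
      then show ?thesis by (simp add: mult.commute)
    qed
  qed (use ep in auto)
  have iG: "integrable \<nu> (\<lambda>y. E h y * G y)"
    by (rule G3[OF ih _ _ _ Gm, of _ 0 "e/4" 1 "p+2"]) (use ep in \<open>auto simp: G_def intro!: mult_nonneg_nonneg add_nonneg_nonneg S_nonneg zero_le_power\<close>)
  define F where "F y = E h y * (w y * (exp (tdot m t y v) - 1 - tdot m t y v))" for y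
  have Feq: "E (\<lambda>a. h a + v a) y * w y - E h y * w y - (\<Sum>a<m. E h y * (w y * t y a) * v a) = F y" for y
  proof -
    have "(\<Sum>a<m. E h y * (w y * t y a) * v a) = E h y * w y * tdot m t y v"
      unfolding tdot_def sum_distrib_left by (intro sum.cong) auto
    then show ?thesis unfolding F_def E_add by (simp add: algebra_simps)
  qed
  have iF: "integrable \<nu> F"
    using Bochner_Integration.integrable_diff[OF Bochner_Integration.integrable_diff[OF i1 i0]
        Bochner_Integration.integrable_sum[of "{..<m}" \<nu> "\<lambda>a y. E h y * (w y * t y a) * v a"]]
      ia unfolding Feq by (auto intro: integrable_mult_left)
  have "(\<integral>y. E (\<lambda>a. h a + v a) y * w y \<partial>\<nu>) - (\<integral>y. E h y * w y \<partial>\<nu>)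
           - (\<Sum>a<m. (\<integral>y. E h y * (w y * t y a) \<partial>\<nu>) * v a)
       = (\<integral>y. E (\<lambda>a. h a + v a) y * w y - E h y * w y - (\<Sum>a<m. E h y * (w y * t y a) * v a) \<partial>\<nu>)"
  proof -
    have "(\<integral>y. (\<Sum>a<m. E h y * (w y * t y a) * v a) \<partial>\<nu>) = (\<Sum>a<m. (\<integral>y. E h y * (w y * t y a) \<partial>\<nu>) * v a)"
      by (subst Bochner_Integration.integral_sum) (auto intro: integrable_mult_left ia)
    moreover have "integrable \<nu> (\<lambda>y. \<Sum>a<m. E h y * (w y * t y a) * v a)"
      by (rule Bochner_Integration.integrable_sum) (auto intro: integrable_mult_left ia)
    ultimately show ?thesis
      by (simp add: Bochner_Integration.integral_diff i1 i0 Bochner_Integration.integrable_diff)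
  qed
  also have "\<dots> = integral\<^sup>L \<nu> F" unfolding Feq ..
  finally have eqI: "(\<integral>y. E (\<lambda>a. h a + v a) y * w y \<partial>\<nu>) - (\<integral>y. E h y * w y \<partial>\<nu>)
           - (\<Sum>a<m. (\<integral>y. E h y * (w y * t y a) \<partial>\<nu>) * v a) = integral\<^sup>L \<nu> F" .
  have pb: "norm (F y) \<le> V\<^sup>2 * (E h y * G y)" for y
  proof -
    define x where "x = tdot m t y v"
    have x1: "\<bar>x\<bar> \<le> S y * V" unfolding x_def V_def using abs_tdot_le tdot_le_SV order_trans by blast
    have x2: "\<bar>x\<bar> \<le> e / 4 * S y" unfolding x_def using abs_tdot_le tdot_le_Sd[OF v] order_trans
      by (metis mult.commute)
    have Sn: "0 \<le> S y" by (rule S_nonneg)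
    have Vn: "0 \<le> V" unfolding V_def by (simp add: sum_nonneg)
    have r: "\<bar>exp x - 1 - x\<bar> \<le> exp (e / 4 * S y) * (S y * V)\<^sup>2"
    proof -
      have "\<bar>exp x - 1 - x\<bar> \<le> exp \<bar>x\<bar> * x\<^sup>2" by (rule exp_taylor2)
      also have "\<dots> = exp \<bar>x\<bar> * \<bar>x\<bar>\<^sup>2" by simp
      also have "\<dots> \<le> exp (e / 4 * S y) * (S y * V)\<^sup>2"
        using x1 x2 by (intro mult_mono power_mono) auto
      finally show ?thesis .
    qed
    have "S y ^ 2 \<le> (1 + S y) ^ 2" using Sn by (intro power_mono) auto
    have Ep: "0 < E h y" by (rule E_pos)
    have "norm (F y) = E h y * (\<bar>w y\<bar> * \<bar>exp x - 1 - x\<bar>)"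
      unfolding F_def x_def using Ep by (simp add: abs_mult)
    also have "\<dots> \<le> E h y * ((1 + S y) ^ p * (exp (e / 4 * S y) * (S y * V)\<^sup>2))"
      using Ep wb[of y] r by (intro mult_left_mono mult_mono) auto
    also have "\<dots> = V\<^sup>2 * (E h y * ((1 + S y) ^ p * S y ^ 2 * exp (e / 4 * S y)))"
      by (simp add: power_mult_distrib algebra_simps)
    also have "\<dots> \<le> V\<^sup>2 * (E h y * ((1 + S y) ^ p * (1 + S y) ^ 2 * exp (e / 4 * S y)))"
      using Ep Sn \<open>S y ^ 2 \<le> (1 + S y) ^ 2\<close> by (intro mult_left_mono mult_right_mono) auto
    also have "\<dots> = V\<^sup>2 * (E h y * G y)" unfolding G_def by (simp add: power_add power2_eq_square)
    finally show ?thesis .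
  qed
  have "norm (integral\<^sup>L \<nu> F) \<le> (\<integral>y. V\<^sup>2 * (E h y * G y) \<partial>\<nu>)"
  proof (rule order_trans[OF Bochner_Integration.integral_norm_bound])
    show "(\<integral>y. norm (F y) \<partial>\<nu>) \<le> (\<integral>y. V\<^sup>2 * (E h y * G y) \<partial>\<nu>)"
      by (rule Bochner_Integration.integral_mono) (use iF iG pb in auto)
  qed
  also have "\<dots> = (\<integral>y. E h y * G y \<partial>\<nu>) * V\<^sup>2" by simp
  finally show ?thesis unfolding eqI V_def G_def by simp
qed

end


context efam
begin

definition P where "P h = expfam \<nu> m t h"

lemma abs_t_le_1S: "a < m \<Longrightarrow> \<bar>t y a\<bar> \<le> 1 + S y"
  using abs_t_le_S[of a y] by simp

lemma intr_e: "intr h e \<Longrightarrow> e > 0" unfolding intr_def by auto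

lemma intr_near: "intr h e \<Longrightarrow> \<forall>a<m. \<bar>h' a - h a\<bar> < e \<Longrightarrow> h' \<in> nat_param_space \<nu> m t"
  unfolding intr_def by auto

lemma Z_quad:
  assumes ih: "intr h e" and v: "\<forall>a<m. \<bar>v a\<bar> \<le> e / 4"
  shows "\<bar>Z (\<lambda>a. h a + v a) - Z h - (\<Sum>a<m. Za a h * v a)\<bar>
    \<le> (\<integral>y. E h y * ((1 + S y) ^ (0 + 2) * exp (e / 4 * S y)) \<partial>\<nu>) * (\<Sum>a<m. \<bar>v a\<bar>)\<^sup>2"
proof -
  have ep: "e > 0" by (rule intr_e[OF ih])
  have n1: "(\<lambda>a. h a + v a) \<in> nat_param_space \<nu> m t"
    by (rule intr_near[OF ih]) (use v ep in auto)
  have n0: "h \<in> nat_param_space \<nu> m t" by (rule intr_nps[OF ih])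
  have "\<bar>(\<integral>y. E (\<lambda>a. h a + v a) y * 1 \<partial>\<nu>) - (\<integral>y. E h y * 1 \<partial>\<nu>)
           - (\<Sum>a<m. (\<integral>y. E h y * (1 * t y a) \<partial>\<nu>) * v a)\<bar>
         \<le> (\<integral>y. E h y * ((1 + S y) ^ (0 + 2) * exp (e / 4 * S y)) \<partial>\<nu>) * (\<Sum>a<m. \<bar>v a\<bar>)\<^sup>2"
    by (rule TQ[OF ih _ _ v]) auto
  then show ?thesis by (simp only: mult_1_right mult_1_left nps_Z[OF n1, symmetric] nps_Z[OF n0, symmetric] Za_def[symmetric])
qed

lemma Za_quad:
  assumes ih: "intr h e" and v: "\<forall>a<m. \<bar>v a\<bar> \<le> e / 4" and b: "b < m"
  shows "\<bar>Za b (\<lambda>a. h a + v a) - Za b h - (\<Sum>a<m. Zab b a h * v a)\<bar>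
    \<le> (\<integral>y. E h y * ((1 + S y) ^ (1 + 2) * exp (e / 4 * S y)) \<partial>\<nu>) * (\<Sum>a<m. \<bar>v a\<bar>)\<^sup>2"
  unfolding Za_def Zab_def
  by (rule TQ[OF ih tm[OF b] _ v]) (use abs_t_le_1S[OF b] in auto)

lemma C_nonneg: "0 \<le> (\<integral>y. E h y * ((1 + S y) ^ k * exp (c * S y)) \<partial>\<nu>)"
  by (rule integral_nonneg_AE) (auto intro!: AE_I2 mult_nonneg_nonneg simp: less_imp_le[OF E_pos] S_nonneg)

lemma Z_curve:
  assumes ih: "intr h e" and g0: "g s0 = h"
    and gd: "\<And>a. a < m \<Longrightarrow> ((\<lambda>s. g s a) has_real_derivative g' a) (at s0)"
  shows "((\<lambda>s. Z (g s)) has_real_derivative (\<Sum>a<m. Za a h * g' a)) (at s0)"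
  by (rule curve_deriv[where \<delta>="e/4", OF Z_quad[OF ih] _ C_nonneg g0 gd]) (use intr_e[OF ih] in auto)

lemma Za_curve:
  assumes ih: "intr h e" and g0: "g s0 = h" and b: "b < m"
    and gd: "\<And>a. a < m \<Longrightarrow> ((\<lambda>s. g s a) has_real_derivative g' a) (at s0)"
  shows "((\<lambda>s. Za b (g s)) has_real_derivative (\<Sum>a<m. Zab b a h * g' a)) (at s0)"
  by (rule curve_deriv[where \<delta>="e/4", OF Za_quad[OF ih _ b] _ C_nonneg g0 gd]) (use intr_e[OF ih] in auto)

lemma dens_meas[measurable]: "expfam_dens \<nu> m t h \<in> borel_measurable \<nu>"
  unfolding expfam_dens_def by measurable

lemma ln_dens: "ln (expfam_dens \<nu> m t h y) = tdot m t y h - ln (Z h)"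
  unfolding expfam_dens_def log_partition_def Z_def by simp

lemma dens_eq: "h \<in> nat_param_space \<nu> m t \<Longrightarrow> expfam_dens \<nu> m t h y = E h y / Z h"
  using nps_Zpos[of h]
  unfolding expfam_dens_def log_partition_def E_def by (simp add: exp_diff Z_def)

lemma sets_P: "sets (P h) = sets \<nu>"
  unfolding P_def expfam_def by simp

lemma meas_P: "f \<in> borel_measurable \<nu> \<Longrightarrow> f \<in> borel_measurable (P h)"
  using measurable_cong_sets[OF sets_P[symmetric] refl] by blast

lemma integral_P:
  assumes "h \<in> nat_param_space \<nu> m t" "f \<in> borel_measurable \<nu>"
  shows "(\<integral>y. f y \<partial>P h) = (\<integral>y. E h y * f y \<partial>\<nu>) / Z h"
proof -
  have "(\<integral>y. f y \<partial>P h) = (\<integral>y. expfam_dens \<nu> m t h y * f y \<partial>\<nu>)"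
    unfolding P_def expfam_def
    by (subst integral_density) (auto simp: assms expfam_dens_def)
  also have "\<dots> = (\<integral>y. E h y * f y / Z h \<partial>\<nu>)" using dens_eq[OF assms(1)] by simp
  finally show ?thesis by simp
qed

lemma integrable_P:
  assumes "h \<in> nat_param_space \<nu> m t" "f \<in> borel_measurable \<nu>"
  shows "integrable (P h) f \<longleftrightarrow> integrable \<nu> (\<lambda>y. E h y * f y)"
proof -
  have "integrable (P h) f \<longleftrightarrow> integrable \<nu> (\<lambda>y. expfam_dens \<nu> m t h y * f y)"
    unfolding P_def expfam_def
    by (subst integrable_density) (auto simp: assms expfam_dens_def)
  also have "\<dots> \<longleftrightarrow> integrable \<nu> (\<lambda>y. inverse (Z h) * (E h y * f y))"
    using dens_eq[OF assms(1)] by (simp add: divide_inverse mult_ac)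
  also have "\<dots> \<longleftrightarrow> integrable \<nu> (\<lambda>y. E h y * f y)"
    using nps_Zpos[OF assms(1)] by (subst integrable_mult_left_iff) simp
  finally show ?thesis .
qed

lemma prob_P:
  assumes "h \<in> nat_param_space \<nu> m t"
  shows "prob_space (P h)"
proof (rule prob_spaceI)
  have "emeasure (P h) (space (P h)) = (\<integral>\<^sup>+ y. ennreal (expfam_dens \<nu> m t h y) * indicator (space \<nu>) y \<partial>\<nu>)"
    unfolding P_def expfam_def by (subst emeasure_density) (auto simp: nn_integral_set_ennreal)
  also have "\<dots> = (\<integral>\<^sup>+ y. ennreal (E h y / Z h) \<partial>\<nu>)"
    by (rule nn_integral_cong) (simp add: dens_eq[OF assms])
  also have "\<dots> = ennreal (\<integral>y. E h y / Z h \<partial>\<nu>)"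
    by (rule nn_integral_eq_integral)
       (auto intro: integrable_divide nps_int[OF assms] simp: less_imp_le[OF E_pos] less_imp_le[OF nps_Zpos[OF assms]])
  also have "\<dots> = 1" using nps_Z[OF assms] nps_Zpos[OF assms] by simp
  finally show "emeasure (P h) (space (P h)) = 1" .
qed

lemma intP:
  assumes ih: "intr h e" and fm: "f \<in> borel_measurable \<nu>" and fb: "\<And>y. \<bar>f y\<bar> \<le> C * (1 + S y) ^ k"
  shows "integrable (P h) f"
  unfolding integrable_P[OF intr_nps[OF ih] fm]
  by (rule G3[OF ih _ _ _ fm, of _ 0 0 C k]) (use intr_e[OF ih] fb in auto)

lemma mean_eq:
  assumes "h \<in> nat_param_space \<nu> m t" "a < m"
  shows "mean_stat \<nu> m t h a = Za a h / Z h"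
  unfolding mean_stat_def Za_def P_def[symmetric] using integral_P[OF assms(1) tm[OF assms(2)]] .

lemma fisher_eq:
  assumes ih: "intr h e" and a: "a < m" and b: "b < m"
  shows "fisher_h \<nu> m t h a b = Zab a b h / Z h - mean_stat \<nu> m t h a * mean_stat \<nu> m t h b"
proof -
  have np: "h \<in> nat_param_space \<nu> m t" by (rule intr_nps[OF ih])
  interpret ps: prob_space "P h" by (rule prob_P[OF np])
  define ma where "ma = mean_stat \<nu> m t h a"
  define mb where "mb = mean_stat \<nu> m t h b"
  have ma: "ma = (\<integral>y. t y a \<partial>P h)" unfolding ma_def mean_stat_def P_def ..
  have mb: "mb = (\<integral>y. t y b \<partial>P h)" unfolding mb_def mean_stat_def P_def ..
  have ia: "integrable (P h) (\<lambda>y. t y a)"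
    by (rule intP[OF ih tm[OF a], of 1 1]) (use abs_t_le_1S[OF a] in auto)
  have ib: "integrable (P h) (\<lambda>y. t y b)"
    by (rule intP[OF ih tm[OF b], of 1 1]) (use abs_t_le_1S[OF b] in auto)
  have iab: "integrable (P h) (\<lambda>y. t y a * t y b)"
  proof (rule intP[OF ih _ _, of _ 1 2])
    show "(\<lambda>y. t y a * t y b) \<in> borel_measurable \<nu>" using tm[OF a] tm[OF b] by measurable
    show "\<bar>t y a * t y b\<bar> \<le> 1 * (1 + S y) ^ 2" for y
    proof -
      have "\<bar>t y a\<bar> * \<bar>t y b\<bar> \<le> (1 + S y) * (1 + S y)"
        using abs_t_le_1S[OF a, of y] abs_t_le_1S[OF b, of y] S_nonneg[of y]
        by (intro mult_mono) auto
      then show ?thesis by (simp add: abs_mult power2_eq_square)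
    qed
  qed
  have "fisher_h \<nu> m t h a b = (\<integral>y. t y a * t y b - ma * t y b - mb * t y a + ma * mb \<partial>P h)"
    unfolding fisher_h_def P_def[symmetric] ma_def[symmetric] mb_def[symmetric]
    by (rule Bochner_Integration.integral_cong) (auto simp: algebra_simps)
  also have "\<dots> = (\<integral>y. t y a * t y b \<partial>P h) - ma * mb - mb * ma + ma * mb"
    using ia ib iab by (simp add: ma mb ps.prob_space)
  also have "(\<integral>y. t y a * t y b \<partial>P h) = Zab a b h / Z h"
    unfolding Zab_def using integral_P[OF np, of "\<lambda>y. t y a * t y b"] tm[OF a] tm[OF b] by simp
  finally show ?thesis unfolding ma_def mb_def by simp
qed

end


context efam
begin

lemma score_curve:
  assumes ih: "intr h e" and g0: "g s0 = h"
    and gd: "\<And>a. a < m \<Longrightarrow> ((\<lambda>s. g s a) has_real_derivative g' a) (at s0)"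
  shows "((\<lambda>s. ln (expfam_dens \<nu> m t (g s) y)) has_real_derivative
          (\<Sum>a<m. (t y a - mean_stat \<nu> m t h a) * g' a)) (at s0)"
proof -
  have np: "h \<in> nat_param_space \<nu> m t" by (rule intr_nps[OF ih])
  have Zp: "Z (g s0) > 0" using nps_Zpos[OF np] g0 by simp
  have d1: "((\<lambda>s. tdot m t y (g s)) has_real_derivative (\<Sum>a<m. t y a * g' a)) (at s0)"
    unfolding tdot_def by (rule DERIV_sum) (auto intro!: DERIV_cmult gd)
  have d2: "((\<lambda>s. ln (Z (g s))) has_real_derivative inverse (Z (g s0)) * (\<Sum>a<m. Za a h * g' a)) (at s0)"
    by (rule DERIV_chain2[OF DERIV_ln[OF Zp] Z_curve[OF ih g0 gd]])
  have d: "((\<lambda>s. tdot m t y (g s) - ln (Z (g s))) has_real_derivative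
      (\<Sum>a<m. t y a * g' a) - inverse (Z (g s0)) * (\<Sum>a<m. Za a h * g' a)) (at s0)"
    by (rule DERIV_diff[OF d1 d2])
  have val: "(\<Sum>a<m. t y a * g' a) - inverse (Z (g s0)) * (\<Sum>a<m. Za a h * g' a)
       = (\<Sum>a<m. (t y a - mean_stat \<nu> m t h a) * g' a)"
  proof -
    have "(\<Sum>a<m. (t y a - mean_stat \<nu> m t h a) * g' a)
        = (\<Sum>a<m. t y a * g' a) - (\<Sum>a<m. inverse (Z h) * (Za a h * g' a))"
      unfolding sum_subtractf[symmetric]
      by (rule sum.cong) (auto simp: mean_eq[OF np] left_diff_distrib divide_inverse)
    then show ?thesis using g0 by (simp add: sum_distrib_left)
  qed
  show ?thesis using d unfolding val ln_dens .
qed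

lemma ev_nps:
  assumes ih: "intr h e" and g0: "g sz = h"
    and gd: "\<And>a. a < m \<Longrightarrow> ((\<lambda>s. g s a) has_real_derivative g' a) (at sz)"
  shows "\<forall>\<^sub>F s in nhds sz. \<forall>a\<in>{..<m}. \<bar>g s a - h a\<bar> < e / 2"
proof (rule eventually_ball_finite)
  show "\<forall>a\<in>{..<m}. \<forall>\<^sub>F s in nhds sz. \<bar>g s a - h a\<bar> < e / 2"
  proof
    fix a assume "a \<in> {..<m}"
    then have "isCont (\<lambda>s. g s a) sz" using gd DERIV_isCont by auto
    then have "((\<lambda>s. g s a) \<longlongrightarrow> (\<lambda>s. g s a) sz) (nhds sz)"
      unfolding isCont_def by (rule iffD1[OF tendsto_at_iff_tendsto_nhds])
    then have "((\<lambda>s. g s a) \<longlongrightarrow> h a) (nhds sz)" using g0 by simp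
    moreover have "e / 2 > 0" using intr_e[OF ih] by simp
    ultimately have "\<forall>\<^sub>F s in nhds sz. dist (g s a) (h a) < e / 2" by (rule tendstoD)
    then show "\<forall>\<^sub>F s in nhds sz. \<bar>g s a - h a\<bar> < e / 2"
      by eventually_elim (simp add: dist_real_def)
  qed
qed auto

lemma eta_curve:
  assumes ih: "intr h e" and g0: "g s0 = h" and b: "b < m"
    and gd: "\<And>a. a < m \<Longrightarrow> ((\<lambda>s. g s a) has_real_derivative g' a) (at s0)"
  shows "((\<lambda>s. mean_stat \<nu> m t (g s) b) has_real_derivative
          (\<Sum>a<m. fisher_h \<nu> m t h b a * g' a)) (at s0)"
proof -
  have np: "h \<in> nat_param_space \<nu> m t" by (rule intr_nps[OF ih])
  have Zp: "Z h > 0" by (rule nps_Zpos[OF np])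
  have eq: "\<forall>\<^sub>F s in nhds s0. mean_stat \<nu> m t (g s) b = Za b (g s) / Z (g s)"
  proof -
    have ev: "\<forall>\<^sub>F s in nhds s0. \<forall>a\<in>{..<m}. \<bar>g s a - h a\<bar> < e / 2"
      by (rule ev_nps[where g=g and sz=s0 and g'=g', OF ih g0 gd])
    then show ?thesis
  proof eventually_elim
    case (elim s)
    have "g s \<in> nat_param_space \<nu> m t"
    proof (rule intr_near[OF ih], intro allI impI)
      fix a assume "a < m"
      then have "\<bar>g s a - h a\<bar> < e / 2" using elim by auto
      then show "\<bar>g s a - h a\<bar> < e" using intr_e[OF ih] by linarith
    qed
    then show ?case by (rule mean_eq[OF _ b])
  qed
  qed
  have d: "((\<lambda>s. Za b (g s) / Z (g s)) has_real_derivative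
     ((\<Sum>a<m. Zab b a h * g' a) * Z (g s0) - Za b (g s0) * (\<Sum>a<m. Za a h * g' a)) / (Z (g s0) * Z (g s0))) (at s0)"
    using DERIV_divide[OF Za_curve[OF ih g0 b gd] Z_curve[OF ih g0 gd]] Zp g0 by simp
  have val: "((\<Sum>a<m. Zab b a h * g' a) * Z (g s0) - Za b (g s0) * (\<Sum>a<m. Za a h * g' a)) / (Z (g s0) * Z (g s0))
     = (\<Sum>a<m. fisher_h \<nu> m t h b a * g' a)"
  proof -
    have "(\<Sum>a<m. fisher_h \<nu> m t h b a * g' a)
       = (\<Sum>a<m. (Zab b a h * g' a) / Z h - (Za b h / Z h) * ((Za a h * g' a) / Z h))"
      by (rule sum.cong) (auto simp: fisher_eq[OF ih b] mean_eq[OF np] b left_diff_distrib)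
    also have "\<dots> = (\<Sum>a<m. Zab b a h * g' a) / Z h - (Za b h / Z h) * ((\<Sum>a<m. Za a h * g' a) / Z h)"
      by (simp add: sum_subtractf sum_divide_distrib sum_distrib_left)
    also have "\<dots> = ((\<Sum>a<m. Zab b a h * g' a) * Z h - Za b h * (\<Sum>a<m. Za a h * g' a)) / (Z h * Z h)"
      using Zp by (simp add: field_simps)
    finally show ?thesis using g0 by simp
  qed
  show ?thesis
    using d unfolding val by (subst DERIV_cong_ev[OF refl eq refl])
qed

end


locale nnfam = efam \<nu> m t for \<nu> :: "'y measure" and m t +
  fixes \<sigma> :: "real \<Rightarrow> real" and L :: nat and n :: "nat \<Rightarrow> nat" and x :: "nat \<Rightarrow> real"
  assumes \<sigma>d: "\<forall>z. \<sigma> differentiable (at z)" and nL: "n L = m"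
begin

abbreviation "hh \<theta> \<equiv> net_out \<sigma> L n x \<theta>"
definition Jf where "Jf \<theta> a j = partial_deriv (\<lambda>\<theta>'. net_out \<sigma> L n x \<theta>' a) \<theta> j"
definition Hf where "Hf \<theta> a j k = partial_deriv (\<lambda>\<theta>'. partial_deriv (\<lambda>\<theta>''. net_out \<sigma> L n x \<theta>'' a) \<theta>' k) \<theta> j"

lemma loglik_eq: "loglik \<sigma> L n x \<nu> t y \<theta> = ln (expfam_dens \<nu> m t (hh \<theta>) y)"
  unfolding loglik_def nL ..

lemma net_line_deriv:
  "((\<lambda>s. hh (\<theta>(j:=s)) a) has_real_derivative Jf \<theta> a j) (at (\<theta> j))"
  unfolding Jf_def by (rule pd_deriv[OF D1_net[OF \<sigma>d]])

lemma score:
  assumes ih: "intr (hh \<theta>) e"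
  shows "partial_deriv (loglik \<sigma> L n x \<nu> t y) \<theta> j = (\<Sum>a<m. (t y a - mean_stat \<nu> m t (hh \<theta>) a) * Jf \<theta> a j)"
proof (rule pd_unique)
  have g0: "(\<lambda>s. hh (\<theta>(j:=s))) (\<theta> j) = hh \<theta>" by simp
  show "((\<lambda>s. loglik \<sigma> L n x \<nu> t y (\<theta>(j:=s))) has_real_derivative
      (\<Sum>a<m. (t y a - mean_stat \<nu> m t (hh \<theta>) a) * Jf \<theta> a j)) (at (\<theta> j))"
    unfolding loglik_eq
    by (rule score_curve[where g="\<lambda>s. hh (\<theta>(j:=s))", OF ih g0 net_line_deriv])
qed

lemma hess:
  assumes C2: "C2_fun \<sigma>" and ih: "intr (hh \<theta>) e"
  shows "- partial_deriv (\<lambda>\<theta>'. partial_deriv (loglik \<sigma> L n x \<nu> t y) \<theta>' k) \<theta> j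
    = (\<Sum>a<m. (\<Sum>b<m. fisher_h \<nu> m t (hh \<theta>) a b * Jf \<theta> b j) * Jf \<theta> a k)
      - (\<Sum>a<m. (t y a - mean_stat \<nu> m t (hh \<theta>) a) * Hf \<theta> a j k)"
proof -
  define g where "g s = hh (\<theta>(j:=s))" for s
  have g0: "g (\<theta> j) = hh \<theta>" unfolding g_def by simp
  have gd: "((\<lambda>s. g s a) has_real_derivative Jf \<theta> a j) (at (\<theta> j))" for a
    unfolding g_def by (rule net_line_deriv)
  have ev: "\<forall>\<^sub>F s in nhds (\<theta> j). \<forall>a\<in>{..<m}. \<bar>g s a - hh \<theta> a\<bar> < e / 2"
    by (rule ev_nps[where g=g and sz="\<theta> j" and g'="\<lambda>a. Jf \<theta> a j", OF ih g0 gd])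
  have eq: "\<forall>\<^sub>F s in nhds (\<theta> j). partial_deriv (loglik \<sigma> L n x \<nu> t y) (\<theta>(j:=s)) k
      = (\<Sum>a<m. (t y a - mean_stat \<nu> m t (g s) a) * Jf (\<theta>(j:=s)) a k)"
    using ev
  proof eventually_elim
    case (elim s)
    have "intr (g s) (e / 2)" by (rule intr_shift[OF ih]) (use elim in auto)
    then show ?case unfolding g_def by (rule score)
  qed
  have dJ: "((\<lambda>s. Jf (\<theta>(j:=s)) a k) has_real_derivative Hf \<theta> a j k) (at (\<theta> j))" for a
  proof -
    have "D1 (\<lambda>\<theta>'. partial_deriv (\<lambda>\<theta>''. net_out \<sigma> L n x \<theta>'' a) \<theta>' k)"
      using D2_net[OF C2] unfolding D2_def by blast
    then show ?thesis unfolding Jf_def Hf_def by (rule pd_deriv)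
  qed
  have deta: "((\<lambda>s. mean_stat \<nu> m t (g s) a) has_real_derivative
      (\<Sum>b<m. fisher_h \<nu> m t (hh \<theta>) a b * Jf \<theta> b j)) (at (\<theta> j))" if a: "a < m" for a
    by (rule eta_curve[where g=g and g'="\<lambda>b. Jf \<theta> b j", OF ih g0 a gd])
  have dterm: "((\<lambda>s. (t y a - mean_stat \<nu> m t (g s) a) * Jf (\<theta>(j:=s)) a k) has_real_derivative
      (- (\<Sum>b<m. fisher_h \<nu> m t (hh \<theta>) a b * Jf \<theta> b j)) * Jf \<theta> a k
      + Hf \<theta> a j k * (t y a - mean_stat \<nu> m t (hh \<theta>) a)) (at (\<theta> j))" if a: "a < m" for a
  proof -
    have "((\<lambda>s. t y a - mean_stat \<nu> m t (g s) a) has_real_derivative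
        0 - (\<Sum>b<m. fisher_h \<nu> m t (hh \<theta>) a b * Jf \<theta> b j)) (at (\<theta> j))"
      by (rule DERIV_diff[OF DERIV_const deta[OF a]])
    from DERIV_mult[OF this dJ] show ?thesis using g0 by simp
  qed
  have dsum: "((\<lambda>s. \<Sum>a<m. (t y a - mean_stat \<nu> m t (g s) a) * Jf (\<theta>(j:=s)) a k) has_real_derivative
      (\<Sum>a<m. (- (\<Sum>b<m. fisher_h \<nu> m t (hh \<theta>) a b * Jf \<theta> b j)) * Jf \<theta> a k
      + Hf \<theta> a j k * (t y a - mean_stat \<nu> m t (hh \<theta>) a))) (at (\<theta> j))"
    by (rule DERIV_sum) (use dterm in auto)
  have "partial_deriv (\<lambda>\<theta>'. partial_deriv (loglik \<sigma> L n x \<nu> t y) \<theta>' k) \<theta> j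
     = (\<Sum>a<m. (- (\<Sum>b<m. fisher_h \<nu> m t (hh \<theta>) a b * Jf \<theta> b j)) * Jf \<theta> a k
      + Hf \<theta> a j k * (t y a - mean_stat \<nu> m t (hh \<theta>) a))"
  proof (rule pd_unique)
    show "((\<lambda>s. partial_deriv (loglik \<sigma> L n x \<nu> t y) (\<theta>(j:=s)) k) has_real_derivative
      (\<Sum>a<m. (- (\<Sum>b<m. fisher_h \<nu> m t (hh \<theta>) a b * Jf \<theta> b j)) * Jf \<theta> a k
      + Hf \<theta> a j k * (t y a - mean_stat \<nu> m t (hh \<theta>) a))) (at (\<theta> j))"
      by (subst DERIV_cong_ev[OF refl eq refl]) (rule dsum)
  qed
  also have "\<dots> = - (\<Sum>a<m. (\<Sum>b<m. fisher_h \<nu> m t (hh \<theta>) a b * Jf \<theta> b j) * Jf \<theta> a k)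
      + (\<Sum>a<m. (t y a - mean_stat \<nu> m t (hh \<theta>) a) * Hf \<theta> a j k)"
    unfolding sum_negf[symmetric] sum.distrib[symmetric] by (rule sum.cong) (auto simp: sum_negf)
  finally show ?thesis by simp
qed

end


lemma prod_two:
  assumes "finite A" "i \<in> A" "i' \<in> A"
  shows "(\<Prod>k\<in>A. (if k = i then a k else 1) * (if k = i' then b k else (1::real))) = a i * b i'"
  using assms by (simp add: prod.distrib prod.delta)

lemma iid_cov:
  fixes M :: "'a measure" and f g :: "'a \<Rightarrow> real"
  assumes ps: "prob_space M" and N: "N \<ge> 1"
    and fi: "integrable M f" and gi: "integrable M g" and fgi: "integrable M (\<lambda>y. f y * g y)"
  shows "cov (PiM {..<N} (\<lambda>_. M)) (\<lambda>\<omega>. 1 / real N * (\<Sum>i<N. f (\<omega> i)))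
                                      (\<lambda>\<omega>. 1 / real N * (\<Sum>i<N. g (\<omega> i)))
        = 1 / real N * cov M f g"
proof -
  define \<Omega> where "\<Omega> = PiM {..<N} (\<lambda>_. M)"
  interpret M: prob_space M by (rule ps)
  interpret pps: product_prob_space "\<lambda>_::nat. M" by (rule product_prob_spaceI) (rule ps)
  interpret Op: prob_space \<Omega> unfolding \<Omega>_def by (rule prob_space_PiM) (rule ps)
  have I1: "(\<integral>y. 1 \<partial>M) = (1::real)" by (subst lebesgue_integral_const) (simp add: M.prob_space)
  have ic: "integrable M (\<lambda>y. c)" for c :: real by simp
  have pair: "integrable \<Omega> (\<lambda>\<omega>. \<phi> (\<omega> i) * \<psi> (\<omega> i')) \<and>
      (\<integral>\<omega>. \<phi> (\<omega> i) * \<psi> (\<omega> i') \<partial>\<Omega>) = (\<integral>y. \<phi> y \<partial>M) * (\<integral>y. \<psi> y \<partial>M)"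
    if "i < N" "i' < N" "i \<noteq> i'" "integrable M \<phi>" "integrable M \<psi>" for i i' and \<phi> \<psi> :: "'a \<Rightarrow> real"
  proof -
    define F where "F k y = (if k = i then \<phi> y else 1) * (if k = i' then \<psi> y else 1)" for k y
    have Fi: "integrable M (F k)" for k
      unfolding F_def using that by (cases "k = i"; cases "k = i'") auto
    have eqf: "(\<lambda>\<omega>. \<Prod>k\<in>{..<N}. F k (\<omega> k)) = (\<lambda>\<omega>. \<phi> (\<omega> i) * \<psi> (\<omega> i'))"
    proof
      fix \<omega>
      have "(\<Prod>k\<in>{..<N}. F k (\<omega> k)) = (\<Prod>k\<in>{..<N}. (if k = i then \<phi> (\<omega> k) else 1) * (if k = i' then \<psi> (\<omega> k) else 1))"
        unfolding F_def by (rule prod.cong) auto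
      also have "\<dots> = \<phi> (\<omega> i) * \<psi> (\<omega> i')" using that by (intro prod_two) auto
      finally show "(\<Prod>k\<in>{..<N}. F k (\<omega> k)) = \<phi> (\<omega> i) * \<psi> (\<omega> i')" .
    qed
    have "(\<Prod>k\<in>{..<N}. integral\<^sup>L M (F k)) = (\<Prod>k\<in>{..<N}. (if k = i then (\<integral>y. \<phi> y \<partial>M) else 1) * (if k = i' then (\<integral>y. \<psi> y \<partial>M) else 1))"
      unfolding F_def using that I1 by (intro prod.cong) auto
    also have "\<dots> = (\<integral>y. \<phi> y \<partial>M) * (\<integral>y. \<psi> y \<partial>M)" using that by (intro prod_two) auto
    finally have eqi: "(\<Prod>k\<in>{..<N}. integral\<^sup>L M (F k)) = (\<integral>y. \<phi> y \<partial>M) * (\<integral>y. \<psi> y \<partial>M)" .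
    show ?thesis
      using pps.product_integrable_prod[of "{..<N}" F] pps.product_integral_prod[of "{..<N}" F] Fi
      unfolding \<Omega>_def eqf eqi by auto
  qed
  have marg: "integrable \<Omega> (\<lambda>\<omega>. \<phi> (\<omega> i)) \<and> (\<integral>\<omega>. \<phi> (\<omega> i) \<partial>\<Omega>) = (\<integral>y. \<phi> y \<partial>M)"
    if "i < N" "integrable M \<phi>" for i and \<phi> :: "'a \<Rightarrow> real"
  proof -
    define F where "F k y = (if k = i then \<phi> y else 1)" for k y
    have Fi: "integrable M (F k)" for k
      unfolding F_def using that by (cases "k = i") auto
    have eqf: "(\<lambda>\<omega>. \<Prod>k\<in>{..<N}. F k (\<omega> k)) = (\<lambda>\<omega>. \<phi> (\<omega> i))"
    proof
      fix \<omega>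
      have "(\<Prod>k\<in>{..<N}. F k (\<omega> k)) = (\<Prod>k\<in>{..<N}. (if k = i then \<phi> (\<omega> k) else 1))"
        unfolding F_def by (rule prod.cong) auto
      also have "\<dots> = \<phi> (\<omega> i)" using that by (simp add: prod.delta)
      finally show "(\<Prod>k\<in>{..<N}. F k (\<omega> k)) = \<phi> (\<omega> i)" .
    qed
    have "(\<Prod>k\<in>{..<N}. integral\<^sup>L M (F k)) = (\<Prod>k\<in>{..<N}. (if k = i then (\<integral>y. \<phi> y \<partial>M) else 1))"
      unfolding F_def using I1 by (intro prod.cong) auto
    also have "\<dots> = (\<integral>y. \<phi> y \<partial>M)" using that by (simp add: prod.delta)
    finally have eqi: "(\<Prod>k\<in>{..<N}. integral\<^sup>L M (F k)) = (\<integral>y. \<phi> y \<partial>M)" .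
    show ?thesis
      using pps.product_integrable_prod[of "{..<N}" F] pps.product_integral_prod[of "{..<N}" F] Fi
      unfolding \<Omega>_def eqf eqi by auto
  qed
  define cf where "cf = (\<integral>y. f y \<partial>M)"
  define cg where "cg = (\<integral>y. g y \<partial>M)"
  define ft where "ft y = f y - cf" for y
  define gt where "gt y = g y - cg" for y
  have fti: "integrable M ft" unfolding ft_def using fi by auto
  have gti: "integrable M gt" unfolding gt_def using gi by auto
  have fgti: "integrable M (\<lambda>y. ft y * gt y)"
  proof -
    have "(\<lambda>y. ft y * gt y) = (\<lambda>y. f y * g y - cg * f y - cf * g y + cf * cg)"
      unfolding ft_def gt_def by (auto simp: algebra_simps)
    then show ?thesis using fi gi fgi by auto
  qed
  have ft0: "(\<integral>y. ft y \<partial>M) = 0" unfolding ft_def cf_def using fi I1 by (simp add: M.prob_space)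
  have gt0: "(\<integral>y. gt y \<partial>M) = 0" unfolding gt_def cg_def using gi I1 by (simp add: M.prob_space)
  have Nr: "real N > 0" using N by simp
  have EX: "(\<integral>\<omega>. 1 / real N * (\<Sum>i<N. \<phi> (\<omega> i)) \<partial>\<Omega>) = (\<integral>y. \<phi> y \<partial>M)"
    if "integrable M \<phi>" for \<phi> :: "'a \<Rightarrow> real"
  proof -
    have "(\<integral>\<omega>. 1 / real N * (\<Sum>i<N. \<phi> (\<omega> i)) \<partial>\<Omega>) = 1 / real N * (\<Sum>i<N. (\<integral>\<omega>. \<phi> (\<omega> i) \<partial>\<Omega>))"
      by (subst Bochner_Integration.integral_mult_right_zero, subst Bochner_Integration.integral_sum)
         (use marg that in auto)
    also have "\<dots> = 1 / real N * (\<Sum>i<N. (\<integral>y. \<phi> y \<partial>M))"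
      using marg that by simp
    finally show ?thesis using Nr by simp
  qed
  have cent: "1 / real N * (\<Sum>i<N. \<phi> (\<omega> i)) - c = 1 / real N * (\<Sum>i<N. \<phi> (\<omega> i) - c)" for \<phi> :: "'a \<Rightarrow> real" and \<omega> c
    using Nr by (simp add: sum_subtractf field_simps)
  have "cov \<Omega> (\<lambda>\<omega>. 1 / real N * (\<Sum>i<N. f (\<omega> i))) (\<lambda>\<omega>. 1 / real N * (\<Sum>i<N. g (\<omega> i)))
      = (\<integral>\<omega>. (1 / real N * (\<Sum>i<N. ft (\<omega> i))) * (1 / real N * (\<Sum>i<N. gt (\<omega> i))) \<partial>\<Omega>)"
    unfolding cov_def EX[OF fi] EX[OF gi] cent ft_def gt_def cf_def cg_def ..
  also have "\<dots> = (\<integral>\<omega>. 1 / real N ^ 2 * (\<Sum>i<N. \<Sum>i'<N. ft (\<omega> i) * gt (\<omega> i')) \<partial>\<Omega>)"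
    by (simp add: sum_product power2_eq_square)
  also have "\<dots> = 1 / real N ^ 2 * (\<Sum>i<N. \<Sum>i'<N. (\<integral>\<omega>. ft (\<omega> i) * gt (\<omega> i') \<partial>\<Omega>))"
  proof -
    have int: "integrable \<Omega> (\<lambda>\<omega>. ft (\<omega> i) * gt (\<omega> i'))" if "i < N" "i' < N" for i i'
    proof (cases "i = i'")
      case True then show ?thesis using marg[OF that(1) fgti] by simp
    next
      case False then show ?thesis using pair[OF that False fti gti] by simp
    qed
    show ?thesis
      by (subst Bochner_Integration.integral_mult_right_zero, subst Bochner_Integration.integral_sum)
         (auto intro!: Bochner_Integration.integrable_sum int simp: Bochner_Integration.integral_sum int)
  qed
  also have "\<dots> = 1 / real N ^ 2 * (\<Sum>i<N. \<Sum>i'<N. if i = i' then cov M f g else 0)"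
  proof -
    have "(\<integral>\<omega>. ft (\<omega> i) * gt (\<omega> i') \<partial>\<Omega>) = (if i = i' then cov M f g else 0)" if "i < N" "i' < N" for i i'
    proof (cases "i = i'")
      case True then show ?thesis using marg[OF that(1) fgti]
        unfolding cov_def ft_def gt_def cf_def cg_def by simp
    next
      case False then show ?thesis using pair[OF that False fti gti] ft0 by simp
    qed
    then show ?thesis by (intro arg_cong[where f="\<lambda>z. 1 / real N ^ 2 * z"] sum.cong refl) auto
  qed
  also have "\<dots> = 1 / real N * cov M f g"
    using Nr by (simp add: power2_eq_square)
  finally show ?thesis unfolding \<Omega>_def .
qed


lemma cov_expand:
  assumes ps: "prob_space M" and fi: "integrable M f" and gi: "integrable M g"
    and fgi: "integrable M (\<lambda>y. f y * g y)"
  shows "cov M f g = (\<integral>y. f y * g y \<partial>M) - (\<integral>y. f y \<partial>M) * (\<integral>y. g y \<partial>M)"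
proof -
  interpret prob_space M by (rule ps)
  define cf where "cf = (\<integral>y. f y \<partial>M)"
  define cg where "cg = (\<integral>y. g y \<partial>M)"
  have "cov M f g = (\<integral>y. f y * g y - cg * f y - cf * g y + cf * cg \<partial>M)"
    unfolding cov_def cf_def[symmetric] cg_def[symmetric]
    by (rule Bochner_Integration.integral_cong) (auto simp: algebra_simps)
  also have "\<dots> = (\<integral>y. f y * g y \<partial>M) - cg * cf - cf * cg + cf * cg"
    using fi gi fgi by (simp add: cf_def cg_def prob_space)
  finally show ?thesis unfolding cf_def cg_def by simp
qed

lemma cov_shift:
  assumes ps: "prob_space M" and fi: "integrable M f"
  shows "cov M (\<lambda>y. c + f y) g = cov M f g" and "cov M g (\<lambda>y. c + f y) = cov M g f"
proof -
  interpret prob_space M by (rule ps)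
  have "(\<integral>y. c + f y \<partial>M) = c + (\<integral>y. f y \<partial>M)" using fi by (simp add: prob_space)
  then show "cov M (\<lambda>y. c + f y) g = cov M f g" "cov M g (\<lambda>y. c + f y) = cov M g f"
    unfolding cov_def by simp_all
qed

lemma cov_bilin:
  fixes X :: "'p \<Rightarrow> 'a \<Rightarrow> real" and Y :: "'q \<Rightarrow> 'a \<Rightarrow> real"
  assumes ps: "prob_space M" and P1: "finite P1" and P2: "finite P2"
    and Xi: "\<And>p. p \<in> P1 \<Longrightarrow> integrable M (X p)" and Yi: "\<And>q. q \<in> P2 \<Longrightarrow> integrable M (Y q)"
    and XYi: "\<And>p q. p \<in> P1 \<Longrightarrow> q \<in> P2 \<Longrightarrow> integrable M (\<lambda>y. X p y * Y q y)"
  shows "cov M (\<lambda>y. \<Sum>p\<in>P1. \<alpha> p * X p y) (\<lambda>y. \<Sum>q\<in>P2. \<beta> q * Y q y)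
       = (\<Sum>p\<in>P1. \<Sum>q\<in>P2. \<alpha> p * \<beta> q * ((\<integral>y. X p y * Y q y \<partial>M) - (\<integral>y. X p y \<partial>M) * (\<integral>y. Y q y \<partial>M)))"
proof -
  have fi: "integrable M (\<lambda>y. \<Sum>p\<in>P1. \<alpha> p * X p y)"
    by (intro Bochner_Integration.integrable_sum integrable_mult_right Xi)
  have gi: "integrable M (\<lambda>y. \<Sum>q\<in>P2. \<beta> q * Y q y)"
    by (intro Bochner_Integration.integrable_sum integrable_mult_right Yi)
  have fg: "(\<Sum>p\<in>P1. \<alpha> p * X p y) * (\<Sum>q\<in>P2. \<beta> q * Y q y) = (\<Sum>p\<in>P1. \<Sum>q\<in>P2. (\<alpha> p * \<beta> q) * (X p y * Y q y))" for y
    by (simp add: sum_product mult_ac)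
  have fgi: "integrable M (\<lambda>y. (\<Sum>p\<in>P1. \<alpha> p * X p y) * (\<Sum>q\<in>P2. \<beta> q * Y q y))"
    unfolding fg by (intro Bochner_Integration.integrable_sum integrable_mult_right XYi) auto
  have e1: "(\<integral>y. (\<Sum>p\<in>P1. \<alpha> p * X p y) * (\<Sum>q\<in>P2. \<beta> q * Y q y) \<partial>M)
      = (\<Sum>p\<in>P1. \<Sum>q\<in>P2. (\<alpha> p * \<beta> q) * (\<integral>y. X p y * Y q y \<partial>M))"
  proof -
    have "(\<integral>y. (\<Sum>p\<in>P1. \<Sum>q\<in>P2. (\<alpha> p * \<beta> q) * (X p y * Y q y)) \<partial>M)
        = (\<Sum>p\<in>P1. (\<integral>y. (\<Sum>q\<in>P2. (\<alpha> p * \<beta> q) * (X p y * Y q y)) \<partial>M))"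
      by (rule Bochner_Integration.integral_sum)
         (intro Bochner_Integration.integrable_sum integrable_mult_right XYi, auto)
    also have "\<dots> = (\<Sum>p\<in>P1. \<Sum>q\<in>P2. (\<integral>y. (\<alpha> p * \<beta> q) * (X p y * Y q y) \<partial>M))"
      by (rule sum.cong[OF refl], rule Bochner_Integration.integral_sum)
         (intro integrable_mult_right XYi, auto)
    also have "\<dots> = (\<Sum>p\<in>P1. \<Sum>q\<in>P2. (\<alpha> p * \<beta> q) * (\<integral>y. X p y * Y q y \<partial>M))"
      by simp
    finally show ?thesis unfolding fg .
  qed
  have e2: "(\<integral>y. (\<Sum>p\<in>P1. \<alpha> p * X p y) \<partial>M) = (\<Sum>p\<in>P1. \<alpha> p * (\<integral>y. X p y \<partial>M))"
    by (subst Bochner_Integration.integral_sum) (auto intro: integrable_mult_right Xi)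
  have e3: "(\<integral>y. (\<Sum>q\<in>P2. \<beta> q * Y q y) \<partial>M) = (\<Sum>q\<in>P2. \<beta> q * (\<integral>y. Y q y \<partial>M))"
    by (subst Bochner_Integration.integral_sum) (auto intro: integrable_mult_right Yi)
  show ?thesis
    unfolding cov_expand[OF ps fi gi fgi] e1 e2 e3
    unfolding sum_product
    by (simp add: right_diff_distrib sum_subtractf mult_ac)
qed


locale nnpt = nnfam \<nu> m t \<sigma> L n x for \<nu> :: "'y measure" and m t \<sigma> L n x +
  fixes \<theta> :: param and e :: real
  assumes ih: "intr (hh \<theta>) e"
begin

definition \<eta> where "\<eta> a = mean_stat \<nu> m t (hh \<theta>) a"
definition u where "u a y = t y a - \<eta> a"
definition Cu where "Cu = 1 + (\<Sum>a<m. \<bar>\<eta> a\<bar>)"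

lemma np: "hh \<theta> \<in> nat_param_space \<nu> m t" by (rule intr_nps[OF ih])

lemma psP: "prob_space (P (hh \<theta>))" by (rule prob_P[OF np])

lemma u_meas: "a < m \<Longrightarrow> u a \<in> borel_measurable \<nu>"
  unfolding u_def using tm by measurable

lemma Cu_pos: "Cu \<ge> 1" unfolding Cu_def by (simp add: sum_nonneg)

lemma u_bound: "a < m \<Longrightarrow> \<bar>u a y\<bar> \<le> Cu * (1 + S y)"
proof -
  assume a: "a < m"
  have e1: "\<bar>\<eta> a\<bar> \<le> (\<Sum>a<m. \<bar>\<eta> a\<bar>)" using a by (intro member_le_sum) auto
  have Sn: "0 \<le> S y" by (rule S_nonneg)
  have "\<bar>u a y\<bar> \<le> (1 + S y) + \<bar>\<eta> a\<bar>" unfolding u_def using abs_t_le_1S[OF a, of y] by linarith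
  also have "\<dots> \<le> (1 + S y) + (\<Sum>a<m. \<bar>\<eta> a\<bar>) * (1 + S y)"
    using e1 Sn by (smt (verit, best) mult_left_mono mult_cancel_left1 abs_ge_zero sum_nonneg)
  also have "\<dots> = Cu * (1 + S y)" unfolding Cu_def by (simp add: algebra_simps)
  finally show ?thesis .
qed

lemma bound_mult:
  assumes "\<bar>f y\<bar> \<le> A * (1 + S y) ^ k" "\<bar>g y\<bar> \<le> B * (1 + S y) ^ l"
  shows "\<bar>f y * g y\<bar> \<le> (A * B) * (1 + S y) ^ (k + l)"
proof -
  have "\<bar>f y * g y\<bar> \<le> (A * (1 + S y) ^ k) * (B * (1 + S y) ^ l)"
    unfolding abs_mult using assms by (intro mult_mono) auto
  then show ?thesis by (simp add: power_add mult_ac)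
qed

lemma u1: "a < m \<Longrightarrow> \<bar>u a y\<bar> \<le> Cu * (1 + S y) ^ 1"
  using u_bound by simp

lemma intPb: "f \<in> borel_measurable \<nu> \<Longrightarrow> (\<And>y. \<bar>f y\<bar> \<le> C * (1 + S y) ^ k) \<Longrightarrow> integrable (P (hh \<theta>)) f"
  by (rule intP[OF ih])

lemma mean_u: "a < m \<Longrightarrow> (\<integral>y. u a y \<partial>P (hh \<theta>)) = 0"
proof -
  assume a: "a < m"
  interpret prob_space "P (hh \<theta>)" by (rule psP)
  have "integrable (P (hh \<theta>)) (\<lambda>y. t y a)"
    by (rule intPb[OF tm[OF a], of 1 1]) (use abs_t_le_1S[OF a] in auto)
  then show ?thesis unfolding u_def \<eta>_def mean_stat_def P_def[symmetric] by (simp add: prob_space)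
qed

end


context nnpt
begin

lemma lin_bound:
  assumes "\<And>a. a < m \<Longrightarrow> \<bar>X a y\<bar> \<le> A * (1 + S y) ^ k"
  shows "\<bar>\<Sum>a<m. X a y * c a\<bar> \<le> ((\<Sum>a<m. \<bar>c a\<bar>) * A) * (1 + S y) ^ k"
proof -
  have "\<bar>\<Sum>a<m. X a y * c a\<bar> \<le> (\<Sum>a<m. \<bar>X a y\<bar> * \<bar>c a\<bar>)"
    by (rule order_trans[OF sum_abs]) (simp add: abs_mult)
  also have "\<dots> \<le> (\<Sum>a<m. (A * (1 + S y) ^ k) * \<bar>c a\<bar>)"
    using assms by (intro sum_mono mult_right_mono) auto
  also have "\<dots> = ((\<Sum>a<m. \<bar>c a\<bar>) * A) * (1 + S y) ^ k"
    by (simp add: sum_distrib_left sum_distrib_right mult_ac)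
  finally show ?thesis .
qed

definition Q where "Q = {..<m} \<times> {..<m}"
definition F1 where "F1 j k y = (\<Sum>a<m. u a y * Jf \<theta> a j) * (\<Sum>b<m. u b y * Jf \<theta> b k)"
definition al where "al j k p = Jf \<theta> (fst p) j * Jf \<theta> (snd p) k"
definition X where "X p y = u (fst p) y * u (snd p) y"

lemma F1_sum: "F1 j k y = (\<Sum>p\<in>Q. al j k p * X p y)"
proof -
  have "F1 j k y = (\<Sum>a<m. \<Sum>b<m. al j k (a, b) * X (a, b) y)"
    unfolding F1_def sum_product al_def X_def by (simp add: mult_ac)
  also have "\<dots> = (\<Sum>p\<in>Q. al j k p * X p y)"
    unfolding Q_def sum.cartesian_product by (rule sum.cong) auto
  finally show ?thesis .
qed

lemma score_u: "partial_deriv (loglik \<sigma> L n x \<nu> t y) \<theta> j = (\<Sum>a<m. u a y * Jf \<theta> a j)"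
  unfolding score[OF ih] u_def \<eta>_def ..

lemma Ihat1_eq: "Ihat1 \<sigma> L n x \<nu> t N \<theta> \<omega> j k = 1 / real N * (\<Sum>i<N. F1 j k (\<omega> i))"
  unfolding Ihat1_def F1_def score_u ..

lemma X_meas: "p \<in> Q \<Longrightarrow> X p \<in> borel_measurable \<nu>"
  unfolding X_def Q_def using u_meas by (cases p) auto

lemma X_bound:
  assumes "p \<in> Q" shows "\<bar>X p y\<bar> \<le> (Cu * Cu) * (1 + S y) ^ (1 + 1)"
proof -
  obtain a b where p: "p = (a, b)" "a < m" "b < m" using assms unfolding Q_def by auto
  show ?thesis unfolding X_def p(1) fst_conv snd_conv by (rule bound_mult[OF u1[OF p(2)] u1[OF p(3)]])
qed

lemma F1_meas: "F1 j k \<in> borel_measurable \<nu>"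
  unfolding F1_def using u_meas by measurable

lemma F1_bound: "\<bar>F1 j k y\<bar> \<le> (((\<Sum>a<m. \<bar>Jf \<theta> a j\<bar>) * Cu) * ((\<Sum>a<m. \<bar>Jf \<theta> a k\<bar>) * Cu)) * (1 + S y) ^ (1 + 1)"
  unfolding F1_def by (intro bound_mult lin_bound u1)

lemma entry1:
  assumes N: "N \<ge> 1"
  shows "cov (PiM {..<N} (\<lambda>_. P (hh \<theta>))) (\<lambda>\<omega>. Ihat1 \<sigma> L n x \<nu> t N \<theta> \<omega> j k) (\<lambda>\<omega>. Ihat1 \<sigma> L n x \<nu> t N \<theta> \<omega> l q)
    = 1 / real N * (\<Sum>p\<in>Q. \<Sum>r\<in>Q. al j k p * al l q r *
        (kurt_t \<nu> m t (hh \<theta>) (fst p) (snd p) (fst r) (snd r)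
          - fisher_h \<nu> m t (hh \<theta>) (fst p) (snd p) * fisher_h \<nu> m t (hh \<theta>) (fst r) (snd r)))"
proof -
  have i1: "integrable (P (hh \<theta>)) (F1 j k)" by (rule intPb[OF F1_meas F1_bound])
  have i2: "integrable (P (hh \<theta>)) (F1 l q)" by (rule intPb[OF F1_meas F1_bound])
  have i12: "integrable (P (hh \<theta>)) (\<lambda>y. F1 j k y * F1 l q y)"
    by (rule intPb) (use F1_meas in measurable, rule bound_mult[OF F1_bound F1_bound])
  have "cov (PiM {..<N} (\<lambda>_. P (hh \<theta>))) (\<lambda>\<omega>. Ihat1 \<sigma> L n x \<nu> t N \<theta> \<omega> j k) (\<lambda>\<omega>. Ihat1 \<sigma> L n x \<nu> t N \<theta> \<omega> l q)
      = 1 / real N * cov (P (hh \<theta>)) (F1 j k) (F1 l q)"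
    unfolding Ihat1_eq by (rule iid_cov[OF psP N i1 i2 i12])
  also have "cov (P (hh \<theta>)) (F1 j k) (F1 l q)
      = cov (P (hh \<theta>)) (\<lambda>y. \<Sum>p\<in>Q. al j k p * X p y) (\<lambda>y. \<Sum>r\<in>Q. al l q r * X r y)"
    unfolding F1_sum ..
  also have "\<dots> = (\<Sum>p\<in>Q. \<Sum>r\<in>Q. al j k p * al l q r *
        ((\<integral>y. X p y * X r y \<partial>P (hh \<theta>)) - (\<integral>y. X p y \<partial>P (hh \<theta>)) * (\<integral>y. X r y \<partial>P (hh \<theta>))))"
  proof (rule cov_bilin[OF psP])
    show "finite Q" unfolding Q_def by simp
    show "finite Q" unfolding Q_def by simp
    show "integrable (P (hh \<theta>)) (X p)" if "p \<in> Q" for p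
      by (rule intPb[OF X_meas[OF that] X_bound[OF that]])
    show "integrable (P (hh \<theta>)) (X r)" if "r \<in> Q" for r
      by (rule intPb[OF X_meas[OF that] X_bound[OF that]])
    show "integrable (P (hh \<theta>)) (\<lambda>y. X p y * X r y)" if "p \<in> Q" "r \<in> Q" for p r
      by (rule intPb) (use X_meas[OF that(1)] X_meas[OF that(2)] in measurable,
          rule bound_mult[OF X_bound[OF that(1)] X_bound[OF that(2)]])
  qed
  also have "\<dots> = (\<Sum>p\<in>Q. \<Sum>r\<in>Q. al j k p * al l q r *
        (kurt_t \<nu> m t (hh \<theta>) (fst p) (snd p) (fst r) (snd r)
          - fisher_h \<nu> m t (hh \<theta>) (fst p) (snd p) * fisher_h \<nu> m t (hh \<theta>) (fst r) (snd r)))"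
  proof -
    have k: "(\<integral>y. X p y * X r y \<partial>P (hh \<theta>)) = kurt_t \<nu> m t (hh \<theta>) (fst p) (snd p) (fst r) (snd r)" for p r
      unfolding kurt_t_def X_def u_def \<eta>_def P_def by (simp add: mult_ac)
    have f: "(\<integral>y. X p y \<partial>P (hh \<theta>)) = fisher_h \<nu> m t (hh \<theta>) (fst p) (snd p)" for p
      unfolding fisher_h_def X_def u_def \<eta>_def P_def ..
    show ?thesis unfolding k f ..
  qed
  finally show ?thesis .
qed

end


lemma sum4: "(\<Sum>p\<in>A\<times>A. \<Sum>r\<in>A\<times>A. f (fst p) (snd p) (fst r) (snd r)) = (\<Sum>(a,b,c,d)\<in>A\<times>A\<times>A\<times>A. f a b c d)"
  by (simp add: sum.cartesian_product')

lemma bound_dd: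
  fixes \<alpha> \<beta> :: "'p \<Rightarrow> real" and R :: "'p \<Rightarrow> 'p \<Rightarrow> real"
  assumes "\<forall>p\<in>Q. \<bar>\<alpha> p\<bar> \<le> B" "\<forall>r\<in>Q'. \<bar>\<beta> r\<bar> \<le> B'" "0 \<le> B" "0 \<le> B'"
  shows "\<bar>\<Sum>p\<in>Q. \<Sum>r\<in>Q'. \<alpha> p * \<beta> r * R p r\<bar> \<le> B * B' * (\<Sum>p\<in>Q. \<Sum>r\<in>Q'. \<bar>R p r\<bar>)"
proof -
  have "\<bar>\<Sum>p\<in>Q. \<Sum>r\<in>Q'. \<alpha> p * \<beta> r * R p r\<bar> \<le> (\<Sum>p\<in>Q. \<bar>\<Sum>r\<in>Q'. \<alpha> p * \<beta> r * R p r\<bar>)"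
    by (rule sum_abs)
  also have "\<dots> \<le> (\<Sum>p\<in>Q. \<Sum>r\<in>Q'. \<bar>\<alpha> p * \<beta> r * R p r\<bar>)"
    by (intro sum_mono sum_abs)
  also have "\<dots> \<le> (\<Sum>p\<in>Q. \<Sum>r\<in>Q'. B * B' * \<bar>R p r\<bar>)"
    unfolding abs_mult using assms by (intro sum_mono mult_right_mono mult_mono) auto
  also have "\<dots> = B * B' * (\<Sum>p\<in>Q. \<Sum>r\<in>Q'. \<bar>R p r\<bar>)"
    by (simp add: sum_distrib_left)
  finally show ?thesis .
qed

context nnpt
begin

definition c2 where "c2 j k = (\<Sum>a<m. (\<Sum>b<m. fisher_h \<nu> m t (hh \<theta>) a b * Jf \<theta> b j) * Jf \<theta> a k)"
definition F2 where "F2 j k y = c2 j k + (\<Sum>a<m. (- Hf \<theta> a j k) * u a y)"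

lemma hess_u:
  assumes C2: "C2_fun \<sigma>"
  shows "- partial_deriv (\<lambda>\<theta>'. partial_deriv (loglik \<sigma> L n x \<nu> t y) \<theta>' k) \<theta> j = F2 j k y"
  unfolding hess[OF C2 ih] F2_def c2_def u_def \<eta>_def
  by (simp add: sum_negf[symmetric] mult.commute)

lemma Ihat2_eq:
  assumes C2: "C2_fun \<sigma>"
  shows "Ihat2 \<sigma> L n x \<nu> t N \<theta> \<omega> j k = 1 / real N * (\<Sum>i<N. F2 j k (\<omega> i))"
  unfolding Ihat2_def hess_u[OF C2] ..

lemma lin2_meas: "(\<lambda>y. \<Sum>a<m. (- Hf \<theta> a j k) * u a y) \<in> borel_measurable \<nu>"
  using u_meas by measurable

lemma lin2_bound: "\<bar>\<Sum>a<m. (- Hf \<theta> a j k) * u a y\<bar> \<le> ((\<Sum>a<m. \<bar>- Hf \<theta> a j k\<bar>) * Cu) * (1 + S y) ^ 1"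
  using lin_bound[where X=u and A=Cu and k=1 and c="\<lambda>a. - Hf \<theta> a j k" and y=y, OF u1] by (simp add: mult.commute)

lemma F2_meas: "F2 j k \<in> borel_measurable \<nu>"
  unfolding F2_def using lin2_meas by measurable

lemma F2_bound: "\<bar>F2 j k y\<bar> \<le> (\<bar>c2 j k\<bar> + (\<Sum>a<m. \<bar>- Hf \<theta> a j k\<bar>) * Cu) * (1 + S y) ^ 1"
proof -
  have "\<bar>c2 j k\<bar> \<le> \<bar>c2 j k\<bar> * (1 + S y)" using S_nonneg[of y]
    by (simp add: mult_le_cancel_left1)
  then show ?thesis unfolding F2_def using lin2_bound[of j k y]
    by (simp add: distrib_right)
qed

lemma entry2:
  assumes C2: "C2_fun \<sigma>" and N: "N \<ge> 1"
  shows "cov (PiM {..<N} (\<lambda>_. P (hh \<theta>))) (\<lambda>\<omega>. Ihat2 \<sigma> L n x \<nu> t N \<theta> \<omega> j k) (\<lambda>\<omega>. Ihat2 \<sigma> L n x \<nu> t N \<theta> \<omega> l q)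
    = 1 / real N * (\<Sum>a<m. \<Sum>b<m. Hf \<theta> a j k * Hf \<theta> b l q * fisher_h \<nu> m t (hh \<theta>) a b)"
proof -
  have i1: "integrable (P (hh \<theta>)) (F2 j k)" by (rule intPb[OF F2_meas F2_bound])
  have i2: "integrable (P (hh \<theta>)) (F2 l q)" by (rule intPb[OF F2_meas F2_bound])
  have i12: "integrable (P (hh \<theta>)) (\<lambda>y. F2 j k y * F2 l q y)"
    by (rule intPb) (use F2_meas in measurable, rule bound_mult[OF F2_bound F2_bound])
  have li1: "integrable (P (hh \<theta>)) (\<lambda>y. \<Sum>a<m. (- Hf \<theta> a j k) * u a y)" by (rule intPb[OF lin2_meas lin2_bound])
  have li2: "integrable (P (hh \<theta>)) (\<lambda>y. \<Sum>a<m. (- Hf \<theta> a l q) * u a y)" by (rule intPb[OF lin2_meas lin2_bound])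
  have ui: "integrable (P (hh \<theta>)) (u a)" if "a < m" for a by (rule intPb[OF u_meas[OF that] u1[OF that]])
  have "cov (PiM {..<N} (\<lambda>_. P (hh \<theta>))) (\<lambda>\<omega>. Ihat2 \<sigma> L n x \<nu> t N \<theta> \<omega> j k) (\<lambda>\<omega>. Ihat2 \<sigma> L n x \<nu> t N \<theta> \<omega> l q)
      = 1 / real N * cov (P (hh \<theta>)) (F2 j k) (F2 l q)"
    unfolding Ihat2_eq[OF C2] by (rule iid_cov[OF psP N i1 i2 i12])
  also have "cov (P (hh \<theta>)) (F2 j k) (F2 l q)
      = cov (P (hh \<theta>)) (\<lambda>y. \<Sum>a<m. (- Hf \<theta> a j k) * u a y) (\<lambda>y. \<Sum>b<m. (- Hf \<theta> b l q) * u b y)"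
    unfolding F2_def cov_shift(1)[OF psP li1] cov_shift(2)[OF psP li2] ..
  also have "\<dots> = (\<Sum>a<m. \<Sum>b<m. (- Hf \<theta> a j k) * (- Hf \<theta> b l q) *
        ((\<integral>y. u a y * u b y \<partial>P (hh \<theta>)) - (\<integral>y. u a y \<partial>P (hh \<theta>)) * (\<integral>y. u b y \<partial>P (hh \<theta>))))"
  proof (rule cov_bilin[OF psP])
    show "integrable (P (hh \<theta>)) (\<lambda>y. u a y * u b y)" if "a \<in> {..<m}" "b \<in> {..<m}" for a b
    proof (rule intPb)
      show "(\<lambda>y. u a y * u b y) \<in> borel_measurable \<nu>"
        by (intro borel_measurable_times u_meas) (use that in auto)
      show "\<bar>u a y * u b y\<bar> \<le> (Cu * Cu) * (1 + S y) ^ (1 + 1)" for y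
        by (rule bound_mult[OF u1 u1]) (use that in auto)
    qed
  qed (use ui in auto)
  also have "\<dots> = (\<Sum>a<m. \<Sum>b<m. Hf \<theta> a j k * Hf \<theta> b l q * fisher_h \<nu> m t (hh \<theta>) a b)"
  proof (intro sum.cong refl)
    fix a b assume a: "a \<in> {..<m}" and b: "b \<in> {..<m}"
    have "(\<integral>y. u a y * u b y \<partial>P (hh \<theta>)) = fisher_h \<nu> m t (hh \<theta>) a b"
      unfolding fisher_h_def u_def \<eta>_def P_def ..
    then show "(- Hf \<theta> a j k) * (- Hf \<theta> b l q) *
        ((\<integral>y. u a y * u b y \<partial>P (hh \<theta>)) - (\<integral>y. u a y \<partial>P (hh \<theta>)) * (\<integral>y. u b y \<partial>P (hh \<theta>)))
      = Hf \<theta> a j k * Hf \<theta> b l q * fisher_h \<nu> m t (hh \<theta>) a b"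
      using mean_u a b by simp
  qed
  finally show ?thesis .
qed

end


context nnpt
begin

lemma ent1_bound:
  assumes N: "N \<ge> 1" and JM: "0 \<le> JM"
    and Jb: "\<And>a i. a < m \<Longrightarrow> i \<in> {j, k, l, q} \<Longrightarrow> \<bar>Jf \<theta> a i\<bar> \<le> JM"
  shows "\<bar>cov (PiM {..<N} (\<lambda>_. P (hh \<theta>))) (\<lambda>\<omega>. Ihat1 \<sigma> L n x \<nu> t N \<theta> \<omega> j k) (\<lambda>\<omega>. Ihat1 \<sigma> L n x \<nu> t N \<theta> \<omega> l q)\<bar>
    \<le> 1 / real N * JM ^ 4 * (\<Sum>(a,b,c,d)\<in>{..<m}\<times>{..<m}\<times>{..<m}\<times>{..<m}.
          \<bar>kurt_t \<nu> m t (hh \<theta>) a b c d - fisher_h \<nu> m t (hh \<theta>) a b * fisher_h \<nu> m t (hh \<theta>) c d\<bar>)"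
proof -
  have alb: "\<forall>p\<in>Q. \<bar>al i i' p\<bar> \<le> JM * JM" if "i \<in> {j,k,l,q}" "i' \<in> {j,k,l,q}" for i i'
  proof
    fix p assume "p \<in> Q"
    then have p: "fst p < m" "snd p < m" unfolding Q_def by auto
    show "\<bar>al i i' p\<bar> \<le> JM * JM" unfolding al_def abs_mult
      by (rule mult_mono[OF Jb[OF p(1) that(1)] Jb[OF p(2) that(2)] JM abs_ge_zero])
  qed
  have Nr: "0 < real N" using N by simp
  have "\<bar>cov (PiM {..<N} (\<lambda>_. P (hh \<theta>))) (\<lambda>\<omega>. Ihat1 \<sigma> L n x \<nu> t N \<theta> \<omega> j k) (\<lambda>\<omega>. Ihat1 \<sigma> L n x \<nu> t N \<theta> \<omega> l q)\<bar>
     = 1 / real N * \<bar>\<Sum>p\<in>Q. \<Sum>r\<in>Q. al j k p * al l q r *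
        (kurt_t \<nu> m t (hh \<theta>) (fst p) (snd p) (fst r) (snd r)
          - fisher_h \<nu> m t (hh \<theta>) (fst p) (snd p) * fisher_h \<nu> m t (hh \<theta>) (fst r) (snd r))\<bar>"
    unfolding entry1[OF N] using Nr by (simp add: abs_mult)
  also have "\<dots> \<le> 1 / real N * ((JM * JM) * (JM * JM) * (\<Sum>p\<in>Q. \<Sum>r\<in>Q. \<bar>kurt_t \<nu> m t (hh \<theta>) (fst p) (snd p) (fst r) (snd r)
          - fisher_h \<nu> m t (hh \<theta>) (fst p) (snd p) * fisher_h \<nu> m t (hh \<theta>) (fst r) (snd r)\<bar>))"
    using Nr by (intro mult_left_mono bound_dd alb) (auto simp: JM)
  also have "\<dots> = 1 / real N * JM ^ 4 * (\<Sum>(a,b,c,d)\<in>{..<m}\<times>{..<m}\<times>{..<m}\<times>{..<m}.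
          \<bar>kurt_t \<nu> m t (hh \<theta>) a b c d - fisher_h \<nu> m t (hh \<theta>) a b * fisher_h \<nu> m t (hh \<theta>) c d\<bar>)"
    unfolding Q_def sum4[where f="\<lambda>a b c d. \<bar>kurt_t \<nu> m t (hh \<theta>) a b c d - fisher_h \<nu> m t (hh \<theta>) a b * fisher_h \<nu> m t (hh \<theta>) c d\<bar>"]
    by (simp add: power4_eq_xxxx mult_ac)
  finally show ?thesis .
qed

lemma ent2_bound:
  assumes C2: "C2_fun \<sigma>" and N: "N \<ge> 1" and HM: "0 \<le> HM"
    and Hb: "\<And>a i i'. a < m \<Longrightarrow> (i, i') \<in> {(j, k), (l, q)} \<Longrightarrow> \<bar>Hf \<theta> a i i'\<bar> \<le> HM"
  shows "\<bar>cov (PiM {..<N} (\<lambda>_. P (hh \<theta>))) (\<lambda>\<omega>. Ihat2 \<sigma> L n x \<nu> t N \<theta> \<omega> j k) (\<lambda>\<omega>. Ihat2 \<sigma> L n x \<nu> t N \<theta> \<omega> l q)\<bar>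
    \<le> 1 / real N * HM ^ 2 * (\<Sum>(a,b)\<in>{..<m}\<times>{..<m}. \<bar>fisher_h \<nu> m t (hh \<theta>) a b\<bar>)"
proof -
  have Nr: "0 < real N" using N by simp
  have "\<bar>cov (PiM {..<N} (\<lambda>_. P (hh \<theta>))) (\<lambda>\<omega>. Ihat2 \<sigma> L n x \<nu> t N \<theta> \<omega> j k) (\<lambda>\<omega>. Ihat2 \<sigma> L n x \<nu> t N \<theta> \<omega> l q)\<bar>
     = 1 / real N * \<bar>\<Sum>a<m. \<Sum>b<m. Hf \<theta> a j k * Hf \<theta> b l q * fisher_h \<nu> m t (hh \<theta>) a b\<bar>"
    unfolding entry2[OF C2 N] using Nr by (simp add: abs_mult)
  also have "\<dots> \<le> 1 / real N * (HM * HM * (\<Sum>a<m. \<Sum>b<m. \<bar>fisher_h \<nu> m t (hh \<theta>) a b\<bar>))"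
    using Nr Hb by (intro mult_left_mono bound_dd) (auto simp: HM)
  also have "\<dots> = 1 / real N * HM ^ 2 * (\<Sum>(a,b)\<in>{..<m}\<times>{..<m}. \<bar>fisher_h \<nu> m t (hh \<theta>) a b\<bar>)"
    by (simp add: sum.cartesian_product power2_eq_square)
  finally show ?thesis .
qed

end


theorem mainTheorem19:
  fixes \<sigma> :: "real \<Rightarrow> real" and L N :: nat and n :: "nat \<Rightarrow> nat" and x :: "nat \<Rightarrow> real"
    and \<theta> :: param and \<nu> :: "'y measure" and t :: "'y \<Rightarrow> nat \<Rightarrow> real"
  assumes "1 \<le> L" and "\<forall>l\<in>{1..L}. 1 \<le> n l" and "1 \<le> N"
    and "\<forall>z. \<sigma> differentiable (at z)"
    and "\<forall>a<n L. (\<lambda>y. t y a) \<in> borel_measurable \<nu>"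
    and "in_interior_nps \<nu> (n L) t (net_out \<sigma> L n x \<theta>)"
  shows "let hL = net_out \<sigma> L n x \<theta>; m = n L; \<Theta> = param_idx L n;
             \<Omega> = PiM {..<N} (\<lambda>_. expfam \<nu> m t hL);
             J = (\<lambda>(a, j). partial_deriv (\<lambda>\<theta>'. net_out \<sigma> L n x \<theta>' a) \<theta> j);
             H = (\<lambda>(a, j, k). partial_deriv
                    (\<lambda>\<theta>'. partial_deriv (\<lambda>\<theta>''. net_out \<sigma> L n x \<theta>'' a) \<theta>' k) \<theta> j);
             I = fisher_h \<nu> m t hL;
             K = kurt_t \<nu> m t hL
         in norm_inf (\<lambda>(j, k, l, q). cov \<Omega> (\<lambda>\<omega>. Ihat1 \<sigma> L n x \<nu> t N \<theta> \<omega> j k)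
                                          (\<lambda>\<omega>. Ihat1 \<sigma> L n x \<nu> t N \<theta> \<omega> l q))
                     (\<Theta> \<times> \<Theta> \<times> \<Theta> \<times> \<Theta>)
              \<le> 1 / real N * norm_inf J ({..<m} \<times> \<Theta>) ^ 4
                 * norm_one (\<lambda>(a, b, c, d). K a b c d - I a b * I c d)
                            ({..<m} \<times> {..<m} \<times> {..<m} \<times> {..<m})
          \<and> (C2_fun \<sigma> \<longrightarrow>
              norm_inf (\<lambda>(j, k, l, q). cov \<Omega> (\<lambda>\<omega>. Ihat2 \<sigma> L n x \<nu> t N \<theta> \<omega> j k)
                                              (\<lambda>\<omega>. Ihat2 \<sigma> L n x \<nu> t N \<theta> \<omega> l q))
                       (\<Theta> \<times> \<Theta> \<times> \<Theta> \<times> \<Theta>)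
                \<le> 1 / real N * norm_inf H ({..<m} \<times> \<Theta> \<times> \<Theta>) ^ 2
                   * norm_one (\<lambda>(a, b). I a b) ({..<m} \<times> {..<m}))"
proof -
  interpret ef: efam \<nu> "n L" t using assms(5) by unfold_locales auto
  obtain e where e: "e > 0" "\<forall>h'. (\<forall>a<n L. \<bar>h' a - net_out \<sigma> L n x \<theta> a\<bar> < e) \<longrightarrow> h' \<in> nat_param_space \<nu> (n L) t"
    using assms(6) unfolding in_interior_nps_def by blast
  interpret nn: nnpt \<nu> "n L" t \<sigma> L n x \<theta> e
    by unfold_locales (use assms(4) e in \<open>auto simp: ef.intr_def\<close>)
  define \<Theta> where "\<Theta> = param_idx L n"
  have finT: "finite \<Theta>"
  proof (rule finite_subset)
    show "\<Theta> \<subseteq> (SIGMA l:{..<L}. {..<n (Suc l)} \<times> {..n l})" unfolding \<Theta>_def param_idx_def by auto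
  qed auto
  have n1: "1 \<le> n 1" "1 \<le> n L" using assms(1,2) by auto
  have T0: "(0, 0, 0) \<in> \<Theta>" unfolding \<Theta>_def param_idx_def using n1 assms(1) by auto
  have m0: "0 < n L" using n1 by simp
  have N: "N \<ge> 1" by (rule assms(3))
  have PE: "expfam \<nu> (n L) t (net_out \<sigma> L n x \<theta>) = ef.P (net_out \<sigma> L n x \<theta>)" by (simp add: ef.P_def)
  define JM where "JM = norm_inf (\<lambda>(a, j). partial_deriv (\<lambda>\<theta>'. net_out \<sigma> L n x \<theta>' a) \<theta> j) ({..<n L} \<times> \<Theta>)"
  have Jb: "\<bar>nn.Jf \<theta> a j\<bar> \<le> JM" if "a < n L" "j \<in> \<Theta>" for a j
    unfolding JM_def norm_inf_def nn.Jf_def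
    by (rule Max_ge) (use finT that in \<open>auto intro!: image_eqI[where x="(a, j)"]\<close>)
  have JM0: "0 \<le> JM" using Jb[OF m0 T0] by linarith
  define HM where "HM = norm_inf (\<lambda>(a, j, k). partial_deriv
                    (\<lambda>\<theta>'. partial_deriv (\<lambda>\<theta>''. net_out \<sigma> L n x \<theta>'' a) \<theta>' k) \<theta> j) ({..<n L} \<times> \<Theta> \<times> \<Theta>)"
  have Hb: "\<bar>nn.Hf \<theta> a j k\<bar> \<le> HM" if "a < n L" "j \<in> \<Theta>" "k \<in> \<Theta>" for a j k
    unfolding HM_def norm_inf_def nn.Hf_def
    by (rule Max_ge) (use finT that in \<open>auto intro!: image_eqI[where x="(a, j, k)"]\<close>)
  have HM0: "0 \<le> HM" using Hb[OF m0 T0 T0] by linarith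
  have fin4: "finite (\<Theta> \<times> \<Theta> \<times> \<Theta> \<times> \<Theta>)" using finT by simp
  have ne4: "\<Theta> \<times> \<Theta> \<times> \<Theta> \<times> \<Theta> \<noteq> {}" using T0 by blast
  have P1: "norm_inf (\<lambda>(j, k, l, q). cov (PiM {..<N} (\<lambda>_. ef.P (net_out \<sigma> L n x \<theta>))) (\<lambda>\<omega>. Ihat1 \<sigma> L n x \<nu> t N \<theta> \<omega> j k)
                                          (\<lambda>\<omega>. Ihat1 \<sigma> L n x \<nu> t N \<theta> \<omega> l q))
                     (\<Theta> \<times> \<Theta> \<times> \<Theta> \<times> \<Theta>)
              \<le> 1 / real N * JM ^ 4
                 * norm_one (\<lambda>(a, b, c, d). kurt_t \<nu> (n L) t (net_out \<sigma> L n x \<theta>) a b c d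
                     - fisher_h \<nu> (n L) t (net_out \<sigma> L n x \<theta>) a b * fisher_h \<nu> (n L) t (net_out \<sigma> L n x \<theta>) c d)
                            ({..<n L} \<times> {..<n L} \<times> {..<n L} \<times> {..<n L})"
    unfolding norm_inf_def
  proof (subst Max_le_iff, use fin4 ne4 in simp, use fin4 ne4 in simp, intro ballI)
    fix z assume "z \<in> (\<lambda>i. \<bar>(\<lambda>(j, k, l, q). cov (PiM {..<N} (\<lambda>_. ef.P (net_out \<sigma> L n x \<theta>))) (\<lambda>\<omega>. Ihat1 \<sigma> L n x \<nu> t N \<theta> \<omega> j k)
                                          (\<lambda>\<omega>. Ihat1 \<sigma> L n x \<nu> t N \<theta> \<omega> l q)) i\<bar>) ` (\<Theta> \<times> \<Theta> \<times> \<Theta> \<times> \<Theta>)"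
    then obtain j k l q where jk: "j \<in> \<Theta>" "k \<in> \<Theta>" "l \<in> \<Theta>" "q \<in> \<Theta>"
      and z: "z = \<bar>cov (PiM {..<N} (\<lambda>_. ef.P (net_out \<sigma> L n x \<theta>))) (\<lambda>\<omega>. Ihat1 \<sigma> L n x \<nu> t N \<theta> \<omega> j k)
                                          (\<lambda>\<omega>. Ihat1 \<sigma> L n x \<nu> t N \<theta> \<omega> l q)\<bar>" by auto
    have "z \<le> 1 / real N * JM ^ 4 * (\<Sum>(a,b,c,d)\<in>{..<n L}\<times>{..<n L}\<times>{..<n L}\<times>{..<n L}.
          \<bar>kurt_t \<nu> (n L) t (net_out \<sigma> L n x \<theta>) a b c d - fisher_h \<nu> (n L) t (net_out \<sigma> L n x \<theta>) a b * fisher_h \<nu> (n L) t (net_out \<sigma> L n x \<theta>) c d\<bar>)"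
      unfolding z by (rule nn.ent1_bound[OF N JM0]) (use jk Jb in auto)
    also have "\<dots> = 1 / real N * JM ^ 4 * norm_one (\<lambda>(a, b, c, d). kurt_t \<nu> (n L) t (net_out \<sigma> L n x \<theta>) a b c d
                     - fisher_h \<nu> (n L) t (net_out \<sigma> L n x \<theta>) a b * fisher_h \<nu> (n L) t (net_out \<sigma> L n x \<theta>) c d)
                            ({..<n L} \<times> {..<n L} \<times> {..<n L} \<times> {..<n L})"
      unfolding norm_one_def by (simp add: case_prod_beta)
    finally show "z \<le> \<dots>" .
  qed
  have P2: "C2_fun \<sigma> \<Longrightarrow> norm_inf (\<lambda>(j, k, l, q). cov (PiM {..<N} (\<lambda>_. ef.P (net_out \<sigma> L n x \<theta>))) (\<lambda>\<omega>. Ihat2 \<sigma> L n x \<nu> t N \<theta> \<omega> j k)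
                                              (\<lambda>\<omega>. Ihat2 \<sigma> L n x \<nu> t N \<theta> \<omega> l q))
                       (\<Theta> \<times> \<Theta> \<times> \<Theta> \<times> \<Theta>)
                \<le> 1 / real N * HM ^ 2
                   * norm_one (\<lambda>(a, b). fisher_h \<nu> (n L) t (net_out \<sigma> L n x \<theta>) a b) ({..<n L} \<times> {..<n L})"
    unfolding norm_inf_def
  proof (subst Max_le_iff, use fin4 ne4 in simp, use fin4 ne4 in simp, intro ballI)
    assume C2: "C2_fun \<sigma>"
    fix z assume "z \<in> (\<lambda>i. \<bar>(\<lambda>(j, k, l, q). cov (PiM {..<N} (\<lambda>_. ef.P (net_out \<sigma> L n x \<theta>))) (\<lambda>\<omega>. Ihat2 \<sigma> L n x \<nu> t N \<theta> \<omega> j k)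
                                          (\<lambda>\<omega>. Ihat2 \<sigma> L n x \<nu> t N \<theta> \<omega> l q)) i\<bar>) ` (\<Theta> \<times> \<Theta> \<times> \<Theta> \<times> \<Theta>)"
    then obtain j k l q where jk: "j \<in> \<Theta>" "k \<in> \<Theta>" "l \<in> \<Theta>" "q \<in> \<Theta>"
      and z: "z = \<bar>cov (PiM {..<N} (\<lambda>_. ef.P (net_out \<sigma> L n x \<theta>))) (\<lambda>\<omega>. Ihat2 \<sigma> L n x \<nu> t N \<theta> \<omega> j k)
                                          (\<lambda>\<omega>. Ihat2 \<sigma> L n x \<nu> t N \<theta> \<omega> l q)\<bar>" by auto
    have hb: "\<bar>nn.Hf \<theta> a i i'\<bar> \<le> HM" if "a < n L" "(i, i') \<in> {(j, k), (l, q)}" for a i i'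
    proof -
      from that(2) have "i = j \<and> i' = k \<or> i = l \<and> i' = q" by auto
      then show ?thesis
      proof (elim disjE conjE)
        assume "i = j" "i' = k" then show ?thesis using Hb[OF that(1) jk(1) jk(2)] by simp
      next
        assume "i = l" "i' = q" then show ?thesis using Hb[OF that(1) jk(3) jk(4)] by simp
      qed
    qed
    have "z \<le> 1 / real N * HM ^ 2 * (\<Sum>(a,b)\<in>{..<n L}\<times>{..<n L}. \<bar>fisher_h \<nu> (n L) t (net_out \<sigma> L n x \<theta>) a b\<bar>)"
      unfolding z by (rule nn.ent2_bound[OF C2 N HM0 hb])
    also have "\<dots> = 1 / real N * HM ^ 2 * norm_one (\<lambda>(a, b). fisher_h \<nu> (n L) t (net_out \<sigma> L n x \<theta>) a b) ({..<n L} \<times> {..<n L})"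
      unfolding norm_one_def by (simp add: case_prod_beta)
    finally show "z \<le> \<dots>" .
  qed
  show ?thesis
    unfolding Let_def PE \<Theta>_def[symmetric] JM_def[symmetric] HM_def[symmetric]
    using P1 P2 by blast
qed


end
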